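(* Let $U^\star\in\mathbb R^{d\times r}$ have pairwise orthogonal nonzero columns, with smallest singular value $\sigma_r$. Let $r_1\in\{0,\dots,r\}$, $\Lambda=\mathrm{diag}(I_{r_1},-I_{r-r_1})$, $U\in\mathbb R^{d\times r}$, and let $Q\in\mathcal Q_{r_1}$ attain $\inf_{Q\in\mathcal Q_{r_1}}\|U-U^\star Q\|_F$. Then $$\langle U-U^\star Q,\ U(U^{\mathrm T}U-\Lambda U^{\mathrm T}U\Lambda)\rangle\ge\tfrac18\|U^{\mathrm T}U-\Lambda U^{\mathrm T}U\Lambda\|_F^2-\tfrac12\Pi^4(U,U^\star),$$ $$\|U^{\mathrm T}U-\Lambda U^{\mathrm T}U\Lambda\|_F^2\ge8(\sqrt2-1)\sigma_r^2\Pi^2(U,U^\star)-4\|U\Lambda U^{\mathrm T}-U^\star\Lambda U^{\star\mathrm T}\|_F^2,$$ and consequently $$\langle U-U^\star Q,\ U(U^{\mathrm T}U-\Lambda U^{\mathrm T}U\Lambda)\rangle\ge(\sqrt2-1)\sigma_r^2\Pi^2(U,U^\star)-\tfrac12\|U\Lambda U^{\mathrm T}-U^\star\Lambda U^{\star\mathrm T}\|_F^2-\tfrac12\Pi^4(U,U^\star).$$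
   Context: $\mathbb Q^{m\times m}$ denotes orthogonal $m\times m$ matrices; $\mathcal Q_{r_1}=\{\mathrm{diag}(Q_1,Q_2):Q_1\in\mathbb Q^{r_1\times r_1},Q_2\in\mathbb Q^{(r-r_1)\times(r-r_1)}\}$; $\Pi(U_1,U_2)=\inf_{Q\in\mathcal Q_{r_1}}\|U_1-U_2Q\|_F$; $\langle A,B\rangle=\mathrm{tr}(A^{\mathrm T}B)$; $\|\cdot\|_F$ the Frobenius norm. *)

theory Defs
  imports "Jordan_Normal_Form.Matrix" "Jordan_Normal_Form.Char_Poly"
begin

definition frob_inner :: "real mat \<Rightarrow> real mat \<Rightarrow> real" where
  "frob_inner A B = (\<Sum>i<dim_row A. \<Sum>j<dim_col A. A $$ (i,j) * B $$ (i,j))"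

definition frob_norm :: "real mat \<Rightarrow> real" where
  "frob_norm A = sqrt (\<Sum>i<dim_row A. \<Sum>j<dim_col A. (A $$ (i,j))^2)"

definition orth_mats :: "nat \<Rightarrow> real mat set" where
  "orth_mats m = {Q. Q \<in> carrier_mat m m \<and> transpose_mat Q * Q = 1\<^sub>m m}"

definition Qblock :: "nat \<Rightarrow> nat \<Rightarrow> real mat set" where
  "Qblock r r1 = {four_block_mat Q1 (0\<^sub>m r1 (r - r1)) (0\<^sub>m (r - r1) r1) Q2 | Q1 Q2.
                   Q1 \<in> orth_mats r1 \<and> Q2 \<in> orth_mats (r - r1)}"

definition Lam :: "nat \<Rightarrow> nat \<Rightarrow> real mat" where
  "Lam r r1 = four_block_mat (1\<^sub>m r1) (0\<^sub>m r1 (r - r1)) (0\<^sub>m (r - r1) r1) (- 1\<^sub>m (r - r1))"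

definition Pi_dist :: "nat \<Rightarrow> real mat \<Rightarrow> real mat \<Rightarrow> real" where
  "Pi_dist r1 U1 U2 = (INF Q\<in>Qblock (dim_col U2) r1. frob_norm (U1 - U2 * Q))"

definition smallest_singular_value :: "real mat \<Rightarrow> real" where
  "smallest_singular_value A = sqrt (Min {k. eigenvalue (transpose_mat A * A) k})"

end

theory Submission
  imports Defs
begin


lemma mult_entry:
  assumes "A \<in> carrier_mat n k" "B \<in> carrier_mat k m" "i < n" "j < m"
  shows "(A * B) $$ (i,j) = (\<Sum>l<k. A $$ (i,l) * B $$ (l,j))"
  using assms by (auto simp: scalar_prod_def atLeast0LessThan intro!: sum.cong)

lemma mult_entry2:
  "i < dim_row A \<Longrightarrow> j < dim_col B \<Longrightarrow> dim_col A = dim_row B \<Longrightarrow> (A * B) $$ (i,j) = (\<Sum>l<dim_row B. A $$ (i,l) * B $$ (l,j))"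
  by (auto simp: scalar_prod_def atLeast0LessThan intro!: sum.cong)

declare index_mult_mat(1)[simp del]
declare mult_entry2[simp]

lemma rc_entry:
  assumes "A \<in> carrier_mat n k" "B \<in> carrier_mat k m" "i < n" "j < m"
  shows "row A i \<bullet> col B j = (\<Sum>l<k. A $$ (i,l) * B $$ (l,j))"
  using mult_entry[OF assms] index_mult_mat(1)[of i A j B] assms by simp

lemma frob_norm_sq: "(frob_norm A)^2 = frob_inner A A"
  unfolding frob_norm_def frob_inner_def
  by (subst real_sqrt_pow2) (auto intro!: sum_nonneg simp: power2_eq_square)

lemma frob_norm_nonneg: "frob_norm A \<ge> 0"
  unfolding frob_norm_def by (auto intro!: sum_nonneg)

lemma frob_inner_self_nonneg: "frob_inner A A \<ge> 0"
  unfolding frob_inner_def by (auto intro!: sum_nonneg)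

lemma frob_inner_sym: "A \<in> carrier_mat n m \<Longrightarrow> B \<in> carrier_mat n m \<Longrightarrow> frob_inner A B = frob_inner B A"
  unfolding frob_inner_def by (auto simp: mult.commute)

lemma frob_inner_transp: "A \<in> carrier_mat n m \<Longrightarrow> B \<in> carrier_mat n m \<Longrightarrow>
  frob_inner (transpose_mat A) (transpose_mat B) = frob_inner A B"
  unfolding frob_inner_def by (auto intro: sum.swap)

lemma frob_inner_add_right: "A \<in> carrier_mat n m \<Longrightarrow> B \<in> carrier_mat n m \<Longrightarrow> C \<in> carrier_mat n m \<Longrightarrow>
  frob_inner A (B + C) = frob_inner A B + frob_inner A C"
  unfolding frob_inner_def by (auto simp: algebra_simps sum.distrib)

lemma frob_inner_minus_right: "A \<in> carrier_mat n m \<Longrightarrow> B \<in> carrier_mat n m \<Longrightarrow> C \<in> carrier_mat n m \<Longrightarrow>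
  frob_inner A (B - C) = frob_inner A B - frob_inner A C"
  unfolding frob_inner_def by (auto simp: algebra_simps sum_subtractf)

lemma frob_inner_add_left: "A \<in> carrier_mat n m \<Longrightarrow> B \<in> carrier_mat n m \<Longrightarrow> C \<in> carrier_mat n m \<Longrightarrow>
  frob_inner (B + C) A = frob_inner B A + frob_inner C A"
  unfolding frob_inner_def by (auto simp: algebra_simps sum.distrib)

lemma frob_inner_minus_left: "A \<in> carrier_mat n m \<Longrightarrow> B \<in> carrier_mat n m \<Longrightarrow> C \<in> carrier_mat n m \<Longrightarrow>
  frob_inner (B - C) A = frob_inner B A - frob_inner C A"
  unfolding frob_inner_def by (auto simp: algebra_simps sum_subtractf)

lemma frob_inner_smult_left: "A \<in> carrier_mat n m \<Longrightarrow> B \<in> carrier_mat n m \<Longrightarrow>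
  frob_inner (c \<cdot>\<^sub>m B) A = c * frob_inner B A"
  unfolding frob_inner_def by (auto simp: algebra_simps sum_distrib_left)

lemma frob_inner_smult_right: "A \<in> carrier_mat n m \<Longrightarrow> B \<in> carrier_mat n m \<Longrightarrow>
  frob_inner A (c \<cdot>\<^sub>m B) = c * frob_inner A B"
  unfolding frob_inner_def by (auto simp: algebra_simps sum_distrib_left)

lemma frob_inner_move_left:
  assumes A: "A \<in> carrier_mat n m" and B: "B \<in> carrier_mat n k" and C: "C \<in> carrier_mat k m"
  shows "frob_inner A (B * C) = frob_inner (transpose_mat B * A) C"
proof -
  have "frob_inner A (B * C) = (\<Sum>i<n. \<Sum>j<m. A $$ (i,j) * (\<Sum>l<k. B $$ (i,l) * C $$ (l,j)))"
    unfolding frob_inner_def using A B C by (auto intro!: sum.cong simp: rc_entry[OF B C])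
  also have "\<dots> = (\<Sum>i<n. \<Sum>j<m. \<Sum>l<k. A $$ (i,j) * B $$ (i,l) * C $$ (l,j))"
    by (simp add: sum_distrib_left mult.assoc)
  also have "\<dots> = (\<Sum>l<k. \<Sum>j<m. \<Sum>i<n. A $$ (i,j) * B $$ (i,l) * C $$ (l,j))"
  proof -
    have "(\<Sum>i<n. \<Sum>j<m. \<Sum>l<k. A $$ (i,j) * B $$ (i,l) * C $$ (l,j))
        = (\<Sum>i<n. \<Sum>l<k. \<Sum>j<m. A $$ (i,j) * B $$ (i,l) * C $$ (l,j))"
      by (rule sum.cong, simp, rule sum.swap)
    also have "\<dots> = (\<Sum>l<k. \<Sum>i<n. \<Sum>j<m. A $$ (i,j) * B $$ (i,l) * C $$ (l,j))"
      by (rule sum.swap)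
    also have "\<dots> = (\<Sum>l<k. \<Sum>j<m. \<Sum>i<n. A $$ (i,j) * B $$ (i,l) * C $$ (l,j))"
      by (rule sum.cong, simp, rule sum.swap)
    finally show ?thesis .
  qed
  also have "\<dots> = frob_inner (transpose_mat B * A) C"
  proof -
    have e: "\<And>l j. l < k \<Longrightarrow> j < m \<Longrightarrow> (transpose_mat B * A) $$ (l,j) = (\<Sum>i<n. B $$ (i,l) * A $$ (i,j))"
      using A B by (subst mult_entry[of _ k n _ m]) auto
    show ?thesis unfolding frob_inner_def using A B C
      by (auto simp: e sum_distrib_left intro!: sum.cong simp: mult_ac)
  qed
  finally show ?thesis .
qed

lemma frob_inner_move_right:
  assumes A: "A \<in> carrier_mat n m" and B: "B \<in> carrier_mat n k" and C: "C \<in> carrier_mat k m"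
  shows "frob_inner A (B * C) = frob_inner (A * transpose_mat C) B"
proof -
  have "frob_inner A (B * C) = (\<Sum>i<n. \<Sum>j<m. A $$ (i,j) * (\<Sum>l<k. B $$ (i,l) * C $$ (l,j)))"
    unfolding frob_inner_def using A B C by (auto intro!: sum.cong simp: rc_entry[OF B C])
  also have "\<dots> = (\<Sum>i<n. \<Sum>j<m. \<Sum>l<k. A $$ (i,j) * B $$ (i,l) * C $$ (l,j))"
    by (simp add: sum_distrib_left mult.assoc)
  also have "\<dots> = (\<Sum>i<n. \<Sum>l<k. \<Sum>j<m. A $$ (i,j) * B $$ (i,l) * C $$ (l,j))"
    by (rule sum.cong, simp, rule sum.swap)
  also have "\<dots> = frob_inner (A * transpose_mat C) B"
  proof -
    have e: "\<And>i l. i < n \<Longrightarrow> l < k \<Longrightarrow> (A * transpose_mat C) $$ (i,l) = (\<Sum>j<m. A $$ (i,j) * C $$ (l,j))"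
      using A C by (subst mult_entry[of _ n m _ k]) auto
    show ?thesis unfolding frob_inner_def using A B C
      by (auto simp: e sum_distrib_left intro!: sum.cong simp: mult_ac)
  qed
  finally show ?thesis .
qed

lemma cs_sum: fixes a b :: "'i \<Rightarrow> real"
  shows "(\<Sum>p\<in>I. a p * b p)^2 \<le> (\<Sum>p\<in>I. (a p)^2) * (\<Sum>p\<in>I. (b p)^2)"
proof -
  have "0 \<le> (\<Sum>i\<in>I. \<Sum>j\<in>I. (a i * b j - a j * b i)^2)"
    by (auto intro!: sum_nonneg)
  also have "\<dots> = (\<Sum>i\<in>I. \<Sum>j\<in>I. (a i)^2 * (b j)^2 + (b i)^2 * (a j)^2 - 2 * ((a i * b i) * (a j * b j)))"
    by (intro sum.cong refl) (simp add: power2_eq_square algebra_simps)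
  also have "\<dots> = (\<Sum>i\<in>I. \<Sum>j\<in>I. (a i)^2 * (b j)^2) + (\<Sum>i\<in>I. \<Sum>j\<in>I. (b i)^2 * (a j)^2)
       - 2 * (\<Sum>i\<in>I. \<Sum>j\<in>I. (a i * b i) * (a j * b j))"
    by (simp only: sum_subtractf sum.distrib sum_distrib_left)
  also have "\<dots> = 2 * ((\<Sum>p\<in>I. (a p)^2) * (\<Sum>p\<in>I. (b p)^2) - (\<Sum>p\<in>I. a p * b p)^2)"
    by (simp only: sum_product[symmetric] power2_eq_square) (simp add: algebra_simps)
  finally show ?thesis by simp
qed

lemma frob_cs: assumes "A \<in> carrier_mat n m" "B \<in> carrier_mat n m"
  shows "\<bar>frob_inner A B\<bar> \<le> frob_norm A * frob_norm B"
proof -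
  let ?I = "{..<n} \<times> {..<m}"
  have e1: "frob_inner A B = (\<Sum>p\<in>?I. A $$ p * B $$ p)"
    using assms unfolding frob_inner_def by (simp add: sum.cartesian_product)
  have e2: "frob_norm A = sqrt (\<Sum>p\<in>?I. (A $$ p)^2)"
    using assms unfolding frob_norm_def by (simp add: sum.cartesian_product)
  have e3: "frob_norm B = sqrt (\<Sum>p\<in>?I. (B $$ p)^2)"
    using assms unfolding frob_norm_def by (simp add: sum.cartesian_product)
  have "(\<Sum>p\<in>?I. A $$ p * B $$ p)^2 \<le> (\<Sum>p\<in>?I. (A $$ p)^2) * (\<Sum>p\<in>?I. (B $$ p)^2)"
    by (rule cs_sum)
  note h = this
  have "\<bar>\<Sum>p\<in>?I. A $$ p * B $$ p\<bar> \<le> sqrt ((\<Sum>p\<in>?I. (A $$ p)^2) * (\<Sum>p\<in>?I. (B $$ p)^2))"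
    using real_sqrt_le_mono[OF h] by (simp only: real_sqrt_abs)
  thus ?thesis unfolding e1 e2 e3 by (simp add: real_sqrt_mult)
qed


lemma sum_split_add: "sum f {..<(m::nat) + n} = sum f {..<m} + (\<Sum>i<n. f (m + i))"
  by (induction n) (auto simp: add.commute add.left_commute)

definition dg :: "nat \<Rightarrow> (nat \<Rightarrow> real) \<Rightarrow> real mat" where
  "dg n f = mat n n (\<lambda>(i,j). if i = j then f i else 0)"

definition lam :: "nat \<Rightarrow> nat \<Rightarrow> real" where "lam r1 i = (if i < r1 then 1 else -1)"

definition blockz :: "nat \<Rightarrow> real mat \<Rightarrow> bool" where
  "blockz r1 A = (\<forall>i<dim_row A. \<forall>j<dim_col A. (i < r1) \<noteq> (j < r1) \<longrightarrow> A $$ (i,j) = 0)"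

lemma dg_carrier[simp]: "dg n f \<in> carrier_mat n n" and dg_dims[simp]: "dim_row (dg n f) = n" "dim_col (dg n f) = n"
  by (auto simp: dg_def)

lemma dg_index[simp]: "i < n \<Longrightarrow> j < n \<Longrightarrow> dg n f $$ (i,j) = (if i = j then f i else 0)"
  by (simp add: dg_def)

lemma ifz_mult[simp]: "(if P then x else (0::real)) * y = (if P then x * y else 0)"
  "y * (if P then x else (0::real)) = (if P then y * x else 0)" by auto

lemma dg_left[simp]: "i < n \<Longrightarrow> j < dim_col A \<Longrightarrow> dim_row A = n \<Longrightarrow> (dg n f * A) $$ (i,j) = f i * A $$ (i,j)"
  by simp

lemma dg_right[simp]: "i < dim_row A \<Longrightarrow> j < n \<Longrightarrow> dim_col A = n \<Longrightarrow> (A * dg n f) $$ (i,j) = A $$ (i,j) * f j"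
  by simp

lemma Lam_dg: assumes "r1 \<le> r" shows "Lam r r1 = dg r (lam r1)"
  using assms by (intro eq_matI) (auto simp: Lam_def lam_def)

lemma Lam_carrier[simp]: "r1 \<le> r \<Longrightarrow> Lam r r1 \<in> carrier_mat r r"
  by (simp add: Lam_dg)

lemma blockz_dg: "blockz r1 (dg n f)" by (auto simp: blockz_def)

lemma blockz_mult: assumes A: "A \<in> carrier_mat n k" and B: "B \<in> carrier_mat k m"
  and "blockz r1 A" "blockz r1 B" shows "blockz r1 (A * B)"
  unfolding blockz_def
proof (intro allI impI)
  fix i j assume i: "i < dim_row (A*B)" and j: "j < dim_col (A*B)" and ne: "(i < r1) \<noteq> (j < r1)"
  have "(A * B) $$ (i,j) = (\<Sum>l<k. A $$ (i,l) * B $$ (l,j))" using A B i j by simp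
  also have "\<dots> = 0"
  proof (rule sum.neutral, rule ballI)
    fix l assume l: "l \<in> {..<k}"
    show "A $$ (i,l) * B $$ (l,j) = 0"
    proof (cases "(i < r1) = (l < r1)")
      case True hence "(l < r1) \<noteq> (j < r1)" using ne by auto
      thus ?thesis using assms l j B by (auto simp: blockz_def)
    next
      case False thus ?thesis using assms l i A by (auto simp: blockz_def)
    qed
  qed
  finally show "(A * B) $$ (i,j) = 0" .
qed

lemma blockz_transpose: "blockz r1 A \<Longrightarrow> blockz r1 (transpose_mat A)"
  by (auto simp: blockz_def)

lemma blockz_comm_dg: assumes A: "A \<in> carrier_mat n n" and "blockz r1 A" and f: "\<And>i j. (i < r1) = (j < r1) \<Longrightarrow> f i = f j"
  shows "dg n f * A = A * dg n f"
proof (rule eq_matI)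
  fix i j assume i: "i < dim_row (A * dg n f)" and j: "j < dim_col (A * dg n f)"
  have e: "(dg n f * A) $$ (i,j) = f i * A $$ (i,j)" "(A * dg n f) $$ (i,j) = A $$ (i,j) * f j"
    using i j A by auto
  show "(dg n f * A) $$ (i,j) = (A * dg n f) $$ (i,j)"
  proof (cases "(i < r1) = (j < r1)")
    case True thus ?thesis unfolding e using f[OF True] by simp
  next
    case False hence "A $$ (i,j) = 0" using assms(2) i j A unfolding blockz_def by auto
    thus ?thesis unfolding e by simp
  qed
qed (use A in auto)

lemma Qblock_iff: assumes r1: "r1 \<le> r"
  shows "Q \<in> Qblock r r1 \<longleftrightarrow> Q \<in> carrier_mat r r \<and> transpose_mat Q * Q = 1\<^sub>m r \<and> blockz r1 Q"
proof
  assume "Q \<in> Qblock r r1"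
  then obtain Q1 Q2 where Q: "Q = four_block_mat Q1 (0\<^sub>m r1 (r - r1)) (0\<^sub>m (r - r1) r1) Q2"
    and Q1: "Q1 \<in> orth_mats r1" and Q2: "Q2 \<in> orth_mats (r - r1)" unfolding Qblock_def by blast
  have c1: "Q1 \<in> carrier_mat r1 r1" and o1: "transpose_mat Q1 * Q1 = 1\<^sub>m r1" using Q1 by (auto simp: orth_mats_def)
  have c2: "Q2 \<in> carrier_mat (r-r1) (r-r1)" and o2: "transpose_mat Q2 * Q2 = 1\<^sub>m (r-r1)" using Q2 by (auto simp: orth_mats_def)
  have cQ: "Q \<in> carrier_mat r r" unfolding Q using four_block_carrier_mat[OF c1 c2] r1 by simp
  have tQ: "transpose_mat Q = four_block_mat (transpose_mat Q1) (0\<^sub>m r1 (r - r1)) (0\<^sub>m (r - r1) r1) (transpose_mat Q2)"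
    unfolding Q by (subst transpose_four_block_mat[OF c1 _ _ c2]) auto
  have "transpose_mat Q * Q = four_block_mat (transpose_mat Q1 * Q1 + 0\<^sub>m r1 (r - r1) * 0\<^sub>m (r - r1) r1)
     (transpose_mat Q1 * 0\<^sub>m r1 (r - r1) + 0\<^sub>m r1 (r - r1) * Q2)
     (0\<^sub>m (r - r1) r1 * Q1 + transpose_mat Q2 * 0\<^sub>m (r - r1) r1)
     (0\<^sub>m (r - r1) r1 * 0\<^sub>m r1 (r - r1) + transpose_mat Q2 * Q2)"
    unfolding tQ by (subst Q, rule mult_four_block_mat) (use c1 c2 in auto)
  also have "\<dots> = four_block_mat (1\<^sub>m r1) (0\<^sub>m r1 (r - r1)) (0\<^sub>m (r - r1) r1) (1\<^sub>m (r-r1))"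
    using c1 c2 o1 o2 by (intro cong_four_block_mat) auto
  also have "\<dots> = 1\<^sub>m r" using r1 by simp
  finally have oQ: "transpose_mat Q * Q = 1\<^sub>m r" .
  have "blockz r1 Q" unfolding blockz_def Q using c1 c2 r1 by auto
  thus "Q \<in> carrier_mat r r \<and> transpose_mat Q * Q = 1\<^sub>m r \<and> blockz r1 Q" using cQ oQ by auto
next
  assume "Q \<in> carrier_mat r r \<and> transpose_mat Q * Q = 1\<^sub>m r \<and> blockz r1 Q"
  hence cQ: "Q \<in> carrier_mat r r" and oQ: "transpose_mat Q * Q = 1\<^sub>m r" and bQ: "blockz r1 Q" by auto
  have z: "Q $$ (i,j) = 0" if "i < r" "j < r" "(i < r1) \<noteq> (j < r1)" for i j
    using bQ that cQ by (auto simp: blockz_def)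
  have rr: "r = r1 + (r - r1)" using r1 by simp
  define Q1 where "Q1 = mat r1 r1 (\<lambda>(i,j). Q $$ (i,j))"
  define Q2 where "Q2 = mat (r-r1) (r-r1) (\<lambda>(i,j). Q $$ (r1 + i, r1 + j))"
  have oe: "(\<Sum>l<r. Q $$ (l,i) * Q $$ (l,j)) = (if i = j then 1 else 0)" if "i < r" "j < r" for i j
  proof -
    have "(transpose_mat Q * Q) $$ (i,j) = (if i = j then 1 else 0)" using oQ that by simp
    thus ?thesis using that cQ by simp
  qed
  have "transpose_mat Q1 * Q1 = 1\<^sub>m r1"
  proof (rule eq_matI)
    fix i j assume i: "i < dim_row (1\<^sub>m r1)" and j: "j < dim_col (1\<^sub>m r1)"
    have "(transpose_mat Q1 * Q1) $$ (i,j) = (\<Sum>l<r1. Q $$ (l,i) * Q $$ (l,j))"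
      using i j by (simp add: Q1_def)
    also have "\<dots> = (\<Sum>l<r. Q $$ (l,i) * Q $$ (l,j))"
      using i j r1 by (subst rr, subst sum_split_add) (auto intro!: sum.neutral simp: z)
    also have "\<dots> = 1\<^sub>m r1 $$ (i,j)" using oe i j r1 by simp
    finally show "(transpose_mat Q1 * Q1) $$ (i,j) = 1\<^sub>m r1 $$ (i,j)" .
  qed (auto simp: Q1_def)
  hence Q1o: "Q1 \<in> orth_mats r1" by (auto simp: orth_mats_def Q1_def)
  have "transpose_mat Q2 * Q2 = 1\<^sub>m (r-r1)"
  proof (rule eq_matI)
    fix i j assume i: "i < dim_row (1\<^sub>m (r-r1))" and j: "j < dim_col (1\<^sub>m (r-r1))"
    have "(transpose_mat Q2 * Q2) $$ (i,j) = (\<Sum>l<r-r1. Q $$ (r1+l,r1+i) * Q $$ (r1+l,r1+j))"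
      using i j by (simp add: Q2_def)
    also have "\<dots> = (\<Sum>l<r. Q $$ (l,r1+i) * Q $$ (l,r1+j))"
      using i j r1 by (subst (2) rr, subst sum_split_add) (auto intro!: sum.neutral simp: z)
    also have "\<dots> = 1\<^sub>m (r-r1) $$ (i,j)" using oe[of "r1+i" "r1+j"] i j r1 by simp
    finally show "(transpose_mat Q2 * Q2) $$ (i,j) = 1\<^sub>m (r-r1) $$ (i,j)" .
  qed (auto simp: Q2_def)
  hence Q2o: "Q2 \<in> orth_mats (r-r1)" by (auto simp: orth_mats_def Q2_def)
  have "Q = four_block_mat Q1 (0\<^sub>m r1 (r - r1)) (0\<^sub>m (r - r1) r1) Q2"
    using cQ r1 by (intro eq_matI) (auto simp: Q1_def Q2_def z)
  thus "Q \<in> Qblock r r1" using Q1o Q2o unfolding Qblock_def by blast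
qed

lemma Qblock_mult: assumes r1: "r1 \<le> r" and "Q \<in> Qblock r r1" "R \<in> Qblock r r1"
  shows "Q * R \<in> Qblock r r1"
proof -
  have Q: "Q \<in> carrier_mat r r" "transpose_mat Q * Q = 1\<^sub>m r" "blockz r1 Q"
   and R: "R \<in> carrier_mat r r" "transpose_mat R * R = 1\<^sub>m r" "blockz r1 R"
    using assms Qblock_iff[OF r1] by auto
  have "transpose_mat (Q * R) * (Q * R) = (transpose_mat R * transpose_mat Q) * (Q * R)"
    using Q R by (simp add: transpose_mult)
  also have "\<dots> = transpose_mat R * (transpose_mat Q * (Q * R))"
    using Q R by (subst assoc_mult_mat[of _ r r _ r _ r]) auto
  also have "transpose_mat Q * (Q * R) = (transpose_mat Q * Q) * R"
    using Q R by (subst assoc_mult_mat[of _ r r _ r _ r]) auto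
  also have "\<dots> = R" using Q R by simp
  also have "transpose_mat R * R = 1\<^sub>m r" using R by simp
  finally show ?thesis using Qblock_iff[OF r1] Q R blockz_mult[OF Q(1) R(1) Q(3) R(3)] by auto
qed


lemma pos_lemma: fixes y K :: real
  assumes h: "\<And>t. 0 < t \<Longrightarrow> t \<le> 1/2 \<Longrightarrow> sqrt (1 - t^2) * t * y \<le> t^2 * K"
  shows "y \<le> 0"
proof (rule ccontr)
  assume "\<not> y \<le> 0" hence y: "y > 0" by simp
  define t where "t = min (1/2) (y / (4 * (\<bar>K\<bar> + 1)))"
  have t0: "t > 0" using y by (auto simp: t_def)
  have t1: "t \<le> 1/2" unfolding t_def by (rule min.cobounded1)
  have t2: "t \<le> y / (4 * (\<bar>K\<bar> + 1))" unfolding t_def by (rule min.cobounded2)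
  have "t * \<bar>K\<bar> \<le> y / (4 * (\<bar>K\<bar> + 1)) * \<bar>K\<bar>" using mult_right_mono[OF t2, of "\<bar>K\<bar>"] by simp
  also have "\<dots> < y / 2"
  proof -
    have "y * \<bar>K\<bar> < y * (2 * (\<bar>K\<bar> + 1))" using y by (intro mult_strict_left_mono) auto
    thus ?thesis by (simp add: field_simps)
  qed
  finally have tk: "t * \<bar>K\<bar> < y / 2" .
  have c: "sqrt (1 - t^2) \<ge> 1/2"
  proof -
    have "t^2 \<le> (1/2)^2" using t0 t1 by (intro power_mono) auto
    hence "1/4 \<le> 1 - t^2" by (simp add: power2_eq_square)
    hence "sqrt (1/4) \<le> sqrt (1 - t^2)" by (rule real_sqrt_le_mono)
    moreover have "sqrt (1/4::real) = 1/2" by (simp add: real_sqrt_divide)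
    ultimately show ?thesis by simp
  qed
  have "t^2 * K \<le> t * (t * \<bar>K\<bar>)" using t0 by (simp add: power2_eq_square mult_left_mono)
  also have "\<dots> < t * (y / 2)" using tk t0 by simp
  also have "\<dots> \<le> sqrt (1 - t^2) * t * y"
  proof -
    have "(1/2) * (t * y) \<le> sqrt (1 - t^2) * (t * y)" using c t0 y by (intro mult_right_mono) auto
    thus ?thesis by (simp add: mult_ac)
  qed
  finally show False using h[OF t0 t1] by simp
qed

lemma sym_lemma: fixes x K :: real
  assumes h: "\<And>s. \<bar>s\<bar> \<le> 1/2 \<Longrightarrow> sqrt (1 - s^2) * s * x \<le> s^2 * K"
  shows "x = 0"
proof -
  have "x \<le> 0" by (rule pos_lemma[of x K]) (use h in auto)
  moreover have "-x \<le> 0"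
  proof (rule pos_lemma[of "-x" K])
    fix t :: real assume "0 < t" "t \<le> 1/2"
    thus "sqrt (1 - t^2) * t * (-x) \<le> t^2 * K" using h[of "-t"] by simp
  qed
  ultimately show ?thesis by simp
qed


definition refl :: "nat \<Rightarrow> (nat \<Rightarrow> real) \<Rightarrow> real mat" where
  "refl r w = mat r r (\<lambda>(a,b). (if a = b then 1 else 0) - 2 / (\<Sum>l<r. (w l)^2) * w a * w b)"

definition wsupp :: "nat \<Rightarrow> nat \<Rightarrow> (nat \<Rightarrow> real) \<Rightarrow> bool" where
  "wsupp r1 r w = (\<forall>a<r. \<forall>b<r. w a \<noteq> 0 \<longrightarrow> w b \<noteq> 0 \<longrightarrow> (a < r1) = (b < r1))"

lemma refl_carrier[simp]: "refl r w \<in> carrier_mat r r" "dim_row (refl r w) = r" "dim_col (refl r w) = r"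
  by (auto simp: refl_def)

lemma refl_index: "a < r \<Longrightarrow> b < r \<Longrightarrow> refl r w $$ (a,b) = (if a = b then 1 else 0) - 2 / (\<Sum>l<r. (w l)^2) * w a * w b"
  by (simp add: refl_def)

lemma refl_orth: assumes s: "(\<Sum>l<r. (w l)^2) > 0"
  shows "transpose_mat (refl r w) * refl r w = 1\<^sub>m r"
proof (rule eq_matI)
  fix a b assume a: "a < dim_row (1\<^sub>m r)" and b: "b < dim_col (1\<^sub>m r)"
  define S where "S = (\<Sum>l<r. (w l)^2)"
  define c where "c = 2 / S"
  have cS: "c * c * S = 2 * c" using s by (simp add: c_def S_def field_simps power2_eq_square)
  have "(transpose_mat (refl r w) * refl r w) $$ (a,b) = (\<Sum>l<r. ((if l = a then 1 else 0) - c * w l * w a) * ((if l = b then 1 else 0) - c * w l * w b))"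
    using a b by (auto simp: refl_index c_def S_def intro!: sum.cong)
  also have "\<dots> = (\<Sum>l<r. (if l = a then (if a = b then 1 else 0) else 0) - (if l = a then c * w a * w b else 0)
      - (if l = b then c * w a * w b else 0) + c * c * w a * w b * (w l)^2)"
    by (intro sum.cong refl) (auto simp: algebra_simps power2_eq_square)
  also have "\<dots> = (if a = b then 1 else 0) - c * w a * w b - c * w a * w b + c * c * w a * w b * S"
    using a b by (simp add: sum.distrib sum_subtractf sum_distrib_left[symmetric] S_def)
  also have "\<dots> = 1\<^sub>m r $$ (a,b)" using a b cS by (simp add: algebra_simps) (metis mult.assoc mult.commute)
  finally show "(transpose_mat (refl r w) * refl r w) $$ (a,b) = 1\<^sub>m r $$ (a,b)" .
qed auto

lemma refl_Qblock: assumes r1: "r1 \<le> r" and s: "(\<Sum>l<r. (w l)^2) > 0" and ws: "wsupp r1 r w"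
  shows "refl r w \<in> Qblock r r1"
proof -
  have "blockz r1 (refl r w)" unfolding blockz_def
  proof (intro allI impI)
    fix a b assume a: "a < dim_row (refl r w)" and b: "b < dim_col (refl r w)" and ne: "(a < r1) \<noteq> (b < r1)"
    hence "w a * w b = 0" using ws unfolding wsupp_def by auto
    moreover have "a \<noteq> b" using ne by auto
    ultimately show "refl r w $$ (a,b) = 0" using a b by (simp add: refl_index)
  qed
  thus ?thesis using Qblock_iff[OF r1] refl_orth[OF s] by auto
qed

lemma frob_one: "P \<in> carrier_mat r r \<Longrightarrow> frob_inner P (1\<^sub>m r) = (\<Sum>a<r. P $$ (a,a))"
  unfolding frob_inner_def by (simp add: if_distrib sum.delta cong: if_cong)

lemma frob_refl: assumes P: "P \<in> carrier_mat r r"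
  shows "frob_inner P (refl r w) = (\<Sum>a<r. P $$ (a,a)) - 2 / (\<Sum>l<r. (w l)^2) * (\<Sum>a<r. \<Sum>b<r. w a * P $$ (a,b) * w b)"
proof -
  define c where "c = 2 / (\<Sum>l<r. (w l)^2)"
  have "frob_inner P (refl r w) = (\<Sum>a<r. \<Sum>b<r. (if a = b then P $$ (a,b) else 0) - c * (w a * P $$ (a,b) * w b))"
    unfolding frob_inner_def using P by (auto simp: refl_index c_def algebra_simps intro!: sum.cong)
  also have "\<dots> = (\<Sum>a<r. P $$ (a,a)) - c * (\<Sum>a<r. \<Sum>b<r. w a * P $$ (a,b) * w b)"
    by (simp add: sum_subtractf sum_distrib_left sum.delta)
  finally show ?thesis by (simp add: c_def)
qed

locale optP =
  fixes P :: "real mat" and r r1 :: nat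
  assumes P: "P \<in> carrier_mat r r" and r1: "r1 \<le> r"
    and opt: "\<And>R. R \<in> Qblock r r1 \<Longrightarrow> frob_inner P R \<le> frob_inner P (1\<^sub>m r)"
begin

lemma quad_nonneg: assumes ws: "wsupp r1 r w"
  shows "0 \<le> (\<Sum>a<r. \<Sum>b<r. w a * P $$ (a,b) * w b)"
proof (cases "(\<Sum>l<r. (w l)^2) > 0")
  case True
  have "frob_inner P (refl r w) \<le> frob_inner P (1\<^sub>m r)" by (rule opt[OF refl_Qblock[OF r1 True ws]])
  hence "2 / (\<Sum>l<r. (w l)^2) * (\<Sum>a<r. \<Sum>b<r. w a * P $$ (a,b) * w b) \<ge> 0"
    unfolding frob_refl[OF P] frob_one[OF P] by simp
  thus ?thesis using True by (auto simp: zero_le_divide_iff zero_le_mult_iff)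
next
  case False
  hence "(\<Sum>l<r. (w l)^2) = 0" using sum_nonneg[of "{..<r}" "\<lambda>l. (w l)^2"] by auto
  hence "\<forall>l\<in>{..<r}. (w l)^2 = 0" by (subst sum_nonneg_eq_0_iff[symmetric]) auto
  thus ?thesis by simp
qed


lemma two_point: fixes c s :: real and g :: "nat \<Rightarrow> real" assumes "a \<noteq> b" "a < r" "b < r"
  shows "(\<Sum>l<r. ((if l = a then c else 0) + (if l = b then s else 0)) * g l) = c * g a + s * g b"
proof -
  have "(\<Sum>l<r. ((if l = a then c else 0) + (if l = b then s else 0)) * g l)
     = (\<Sum>l<r. (if l = a then c * g a else 0) + (if l = b then s * g b else 0))"
    using assms by (intro sum.cong refl) auto
  also have "\<dots> = c * g a + s * g b" using assms by (simp add: sum.distrib sum.delta)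
  finally show ?thesis .
qed

lemma dsum_a: "a < r \<Longrightarrow> (\<Sum>i<r. \<Sum>j<(r'::nat). if i = a then f j else (0::real)) = (\<Sum>j<r'. f j)"
proof -
  assume a: "a < r"
  have "(\<Sum>i<r. \<Sum>j<r'. if i = a then f j else (0::real)) = (\<Sum>i<r. if i = a then (\<Sum>j<r'. f j) else 0)"
    by (intro sum.cong refl) auto
  thus ?thesis using a by (simp add: sum.delta)
qed

lemma P_sym: assumes a: "a < r" and b: "b < r" and ab: "(a < r1) = (b < r1)"
  shows "P $$ (a,b) = P $$ (b,a)"
proof (cases "a = b")
  case True thus ?thesis by simp
next
  case ne: False
  have key: "sqrt (1 - s^2) * s * (P $$ (a,b) - P $$ (b,a)) \<le> s^2 * (P $$ (a,a) + P $$ (b,b))"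
    if s: "\<bar>s\<bar> \<le> 1/2" for s
  proof -
    define c where "c = sqrt (1 - s^2)"
    have "\<bar>s\<bar>^2 \<le> (1/2)^2" using s by (intro power_mono) auto
    hence "s^2 \<le> 1/4" by (simp add: power_divide)
    hence "s^2 \<le> 1" by simp
    hence cc: "c^2 = 1 - s^2" by (simp add: c_def)
    define u where "u = (\<lambda>l. if l = a then (1::real) else 0)"
    define v where "v = (\<lambda>l. (if l = a then c else 0) + (if l = b then s else 0))"
    have "(\<Sum>l<r. (u l)^2) = (\<Sum>l<r. if l = a then 1 else 0)" by (intro sum.cong) (auto simp: u_def)
    hence su: "(\<Sum>l<r. (u l)^2) = 1" using a by simp
    have sv: "(\<Sum>l<r. (v l)^2) = 1"
    proof -
      have "(\<Sum>l<r. (v l)^2) = (\<Sum>l<r. v l * v l)" by (simp add: power2_eq_square)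
      also have "\<dots> = c * v a + s * v b" unfolding v_def[of] by (rule two_point[OF ne a b])
      also have "\<dots> = c^2 + s^2" using ne by (simp add: v_def power2_eq_square)
      finally show ?thesis using cc by simp
    qed
    have wu: "wsupp r1 r u" by (auto simp: wsupp_def u_def)
    have wv: "wsupp r1 r v" unfolding wsupp_def
    proof (intro allI impI)
      fix i j assume "i < r" "j < r" "v i \<noteq> 0" "v j \<noteq> 0"
      hence "i = a \<or> i = b" "j = a \<or> j = b" by (auto simp: v_def split: if_splits)
      thus "(i < r1) = (j < r1)" using ab by auto
    qed
    have Ru: "refl r u \<in> Qblock r r1" by (rule refl_Qblock[OF r1 _ wu]) (simp add: su)
    have Rv: "refl r v \<in> Qblock r r1" by (rule refl_Qblock[OF r1 _ wv]) (simp add: sv)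
    have "frob_inner P (refl r u * refl r v) \<le> frob_inner P (1\<^sub>m r)"
      by (rule opt[OF Qblock_mult[OF r1 Ru Rv]])
    also have "frob_inner P (refl r u * refl r v) = frob_inner (transpose_mat (refl r u) * P) (refl r v)"
      by (rule frob_inner_move_left[OF P]) auto
    finally have ineq: "frob_inner (transpose_mat (refl r u) * P) (refl r v) \<le> (\<Sum>i<r. P $$ (i,i))"
      using frob_one[OF P] by simp
    have Te: "(transpose_mat (refl r u) * P) $$ (i,j) = P $$ (i,j) - 2 * (if i = a then P $$ (a,j) else 0)"
      if "i < r" "j < r" for i j
    proof -
      have "(transpose_mat (refl r u) * P) $$ (i,j) = (\<Sum>l<r. transpose_mat (refl r u) $$ (i,l) * P $$ (l,j))"
        using that P by simp
      also have "\<dots> = (\<Sum>l<r. ((if l = i then 1 else 0) - 2 * u l * u i) * P $$ (l,j))"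
        by (intro sum.cong refl) (use that in \<open>simp add: refl_index su\<close>)
      finally have "(transpose_mat (refl r u) * P) $$ (i,j) = (\<Sum>l<r. ((if l = i then 1 else 0) - 2 * u l * u i) * P $$ (l,j))" .
      also have "\<dots> = (\<Sum>l<r. (if l = i then P $$ (l,j) else 0) - (if l = a then 2 * u i * P $$ (a,j) else 0))"
        by (intro sum.cong refl) (auto simp: u_def)
      also have "\<dots> = P $$ (i,j) - 2 * (if i = a then P $$ (a,j) else 0)"
        using that a by (simp add: sum_subtractf sum.delta u_def)
      finally show ?thesis .
    qed
    have Rve: "refl r v $$ (i,j) = (if i = j then 1 else 0) - 2 * v i * v j" if "i < r" "j < r" for i j
      using that by (simp add: refl_index sv)
    have "frob_inner (transpose_mat (refl r u) * P) (refl r v)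
       = (\<Sum>i<r. \<Sum>j<r. (if i = j then P $$ (i,j) else 0) - 2 * (v i * P $$ (i,j) * v j)
            - (if i = a then (if a = j then 2 * P $$ (a,j) else 0) else 0)
            + (if i = a then 4 * v a * (P $$ (a,j) * v j) else 0))" (is "_ = ?rhs")
    proof -
      have pw: "(transpose_mat (refl r u) * P) $$ (i,j) * refl r v $$ (i,j) =
          (if i = j then P $$ (i,j) else 0) - 2 * (v i * P $$ (i,j) * v j)
            - (if i = a then (if a = j then 2 * P $$ (a,j) else 0) else 0)
            + (if i = a then 4 * v a * (P $$ (a,j) * v j) else 0)" if ij: "i < r" "j < r" for i j
        unfolding Te[OF ij] Rve[OF ij]
        by (cases "i = a"; cases "i = j") (simp_all add: algebra_simps)
      have "frob_inner (transpose_mat (refl r u) * P) (refl r v) =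
         (\<Sum>i<r. \<Sum>j<r. (transpose_mat (refl r u) * P) $$ (i,j) * refl r v $$ (i,j))"
        unfolding frob_inner_def using P by simp
      also have "\<dots> = ?rhs" by (intro sum.cong refl) (rule pw; simp)
      finally show ?thesis .
    qed
    also have "\<dots> = (\<Sum>i<r. P $$ (i,i)) - 2 * (\<Sum>i<r. v i * (\<Sum>j<r. v j * P $$ (i,j)))
        - 2 * P $$ (a,a) + 4 * v a * (\<Sum>j<r. v j * P $$ (a,j))"
    proof -
      have h1: "(\<Sum>i<r. \<Sum>j<r. if i = j then P $$ (i,j) else 0) = (\<Sum>i<r. P $$ (i,i))"
        by (intro sum.cong refl) (simp add: sum.delta')
      have h2: "(\<Sum>i<r. \<Sum>j<r. 2 * (v i * P $$ (i,j) * v j)) = 2 * (\<Sum>i<r. v i * (\<Sum>j<r. v j * P $$ (i,j)))"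
        by (simp add: sum_distrib_left mult_ac)
      have h3: "(\<Sum>i<r. \<Sum>j<r. if i = a then (if a = j then 2 * P $$ (a,j) else 0) else 0) = 2 * P $$ (a,a)"
        using a by (simp add: dsum_a sum.delta)
      have h4: "(\<Sum>i<r. \<Sum>j<r. if i = a then 4 * v a * (P $$ (a,j) * v j) else 0) = 4 * v a * (\<Sum>j<r. v j * P $$ (a,j))"
        using a by (simp add: dsum_a sum_distrib_left mult_ac)
      show ?thesis unfolding h1[symmetric] h2[symmetric] h3[symmetric] h4[symmetric]
        by (simp only: sum.distrib sum_subtractf)
    qed
    finally have ineq2: "(\<Sum>i<r. P $$ (i,i)) - 2 * (\<Sum>i<r. v i * (\<Sum>j<r. v j * P $$ (i,j)))
        - 2 * P $$ (a,a) + 4 * v a * (\<Sum>j<r. v j * P $$ (a,j)) \<le> (\<Sum>i<r. P $$ (i,i))"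
      using ineq by simp
    have l1: "(\<Sum>j<r. v j * P $$ (a,j)) = c * P $$ (a,a) + s * P $$ (a,b)"
      unfolding v_def by (rule two_point[OF ne a b])
    have "(\<Sum>i<r. v i * (\<Sum>j<r. v j * P $$ (i,j))) = (\<Sum>i<r. v i * (c * P $$ (i,a) + s * P $$ (i,b)))"
      by (intro sum.cong refl) (simp add: v_def two_point[OF ne a b])
    also have "\<dots> = c * (c * P $$ (a,a) + s * P $$ (a,b)) + s * (c * P $$ (b,a) + s * P $$ (b,b))"
      unfolding v_def by (rule two_point[OF ne a b])
    finally have l2: "(\<Sum>i<r. v i * (\<Sum>j<r. v j * P $$ (i,j))) = c * (c * P $$ (a,a) + s * P $$ (a,b)) + s * (c * P $$ (b,a) + s * P $$ (b,b))" .
    have va: "v a = c" using ne by (simp add: v_def)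
    have "- 2 * (c * (c * P $$ (a,a) + s * P $$ (a,b)) + s * (c * P $$ (b,a) + s * P $$ (b,b)))
        - 2 * P $$ (a,a) + 4 * c * (c * P $$ (a,a) + s * P $$ (a,b)) \<le> 0"
      using ineq2 unfolding l1 l2 va by simp
    moreover have "- 2 * (c * (c * P $$ (a,a) + s * P $$ (a,b)) + s * (c * P $$ (b,a) + s * P $$ (b,b)))
        - 2 * P $$ (a,a) + 4 * c * (c * P $$ (a,a) + s * P $$ (a,b))
        = 2 * (c * s * (P $$ (a,b) - P $$ (b,a))) + 2 * (c^2 - 1) * P $$ (a,a) - 2 * (s^2 * P $$ (b,b))"
      by (simp add: algebra_simps power2_eq_square)
    moreover have "c^2 - 1 = - (s^2)" using cc by simp
    ultimately have "2 * (c * s * (P $$ (a,b) - P $$ (b,a))) - 2 * (s^2 * P $$ (a,a)) - 2 * (s^2 * P $$ (b,b)) \<le> 0"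
      by simp
    moreover have "s^2 * (P $$ (a,a) + P $$ (b,b)) = s^2 * P $$ (a,a) + s^2 * P $$ (b,b)" by (simp add: algebra_simps)
    ultimately show ?thesis unfolding c_def[symmetric] by linarith
  qed
  have "P $$ (a,b) - P $$ (b,a) = 0" by (rule sym_lemma[OF key])
  thus ?thesis by simp
qed

end


declare minus_carrier_mat[simp]

lemma diag_sum: fixes D :: "real mat" and f :: "nat \<Rightarrow> real" assumes "diagonal_mat D" "D \<in> carrier_mat r r" "a < r"
  shows "(\<Sum>l<r. D $$ (a,l) * f l) = D $$ (a,a) * f a"
proof -
  have "(\<Sum>l<r. D $$ (a,l) * f l) = (\<Sum>l<r. if l = a then D $$ (a,a) * f a else 0)"
    using assms by (intro sum.cong refl) (auto simp: diagonal_mat_def)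
  thus ?thesis using assms by (simp add: sum.delta)
qed

lemma sigma_bound: assumes Us: "Us \<in> carrier_mat d r" and orth: "orthogonal_mat Us" and a: "a < r"
  shows "(smallest_singular_value Us)^2 \<le> (transpose_mat Us * Us) $$ (a,a)"
proof -
  define D where "D = transpose_mat Us * Us"
  have Dc: "D \<in> carrier_mat r r" using Us by (simp add: D_def)
  have diag: "diagonal_mat D" using orth by (simp add: orthogonal_mat_def D_def Let_def)
  have Dnn: "D $$ (b,b) \<ge> 0" if "b < r" for b
    using that Us by (simp add: D_def sum_nonneg)
  define S where "S = {k. eigenvalue D k}"
  have sub: "S \<subseteq> (\<lambda>b. D $$ (b,b)) ` {..<r}"
  proof
    fix k assume "k \<in> S"
    then obtain v where v: "v \<in> carrier_vec r" "v \<noteq> 0\<^sub>v r" "D *\<^sub>v v = k \<cdot>\<^sub>v v"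
      using Dc by (auto simp: S_def eigenvalue_def eigenvector_def)
    have "\<exists>b<r. v $ b \<noteq> 0"
    proof (rule ccontr)
      assume "\<not> ?thesis" hence "v = 0\<^sub>v r" using v(1) by (intro eq_vecI) auto
      thus False using v(2) by simp
    qed
    then obtain b where b: "b < r" "v $ b \<noteq> 0" by auto
    have "(D *\<^sub>v v) $ b = (\<Sum>l<r. D $$ (b,l) * v $ l)"
      using Dc v(1) b by (simp add: scalar_prod_def atLeast0LessThan)
    also have "\<dots> = D $$ (b,b) * v $ b" by (rule diag_sum[OF diag Dc b(1)])
    finally have "D $$ (b,b) * v $ b = k * v $ b" using v b by simp
    hence "k = D $$ (b,b)" using b(2) by simp
    thus "k \<in> (\<lambda>b. D $$ (b,b)) ` {..<r}" using b by auto
  qed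
  have fin: "finite S" by (rule finite_subset[OF sub]) auto
  have mem: "D $$ (a,a) \<in> S"
  proof -
    have "D *\<^sub>v unit_vec r a = D $$ (a,a) \<cdot>\<^sub>v unit_vec r a"
    proof (rule eq_vecI)
      fix i assume i: "i < dim_vec (D $$ (a,a) \<cdot>\<^sub>v unit_vec r a)"
      hence ir: "i < r" by simp
      have "(D *\<^sub>v unit_vec r a) $ i = D $$ (i,a)" using Dc ir a by simp
      also have "\<dots> = (if i = a then D $$ (a,a) else 0)" using diag Dc ir a by (auto simp: diagonal_mat_def)
      finally show "(D *\<^sub>v unit_vec r a) $ i = (D $$ (a,a) \<cdot>\<^sub>v unit_vec r a) $ i" using ir a by simp
    qed (use Dc in simp)
    moreover have "(unit_vec r a :: real vec) \<noteq> 0\<^sub>v r"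
    proof
      assume "(unit_vec r a :: real vec) = 0\<^sub>v r"
      hence "(unit_vec r a :: real vec) $ a = 0\<^sub>v r $ a" by (rule arg_cong)
      thus False using a by simp
    qed
    ultimately show ?thesis using Dc unfolding S_def eigenvalue_def eigenvector_def
      by (intro CollectI exI[of _ "unit_vec r a"]) auto
  qed
  have ne: "S \<noteq> {}" using mem by auto
  have "Min S \<in> S" using fin ne by (rule Min_in)
  hence Mnn: "Min S \<ge> 0" using sub Dnn by auto
  have "(smallest_singular_value Us)^2 = Min S"
    unfolding smallest_singular_value_def S_def[symmetric] D_def[symmetric] using Mnn by simp
  also have "\<dots> \<le> D $$ (a,a)" using fin mem by (rule Min_le)
  finally show ?thesis by (simp add: D_def)
qed

lemma LUs: assumes Us: "Us \<in> carrier_mat d r" and orth: "orthogonal_mat Us" and W: "W \<in> carrier_mat r m"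
  shows "frob_inner (Us * W) (Us * W) \<ge> (smallest_singular_value Us)^2 * frob_inner W W"
proof -
  define D where "D = transpose_mat Us * Us"
  define \<sigma>2 where "\<sigma>2 = (smallest_singular_value Us)^2"
  have Dc: "D \<in> carrier_mat r r" using Us by (simp add: D_def)
  have diag: "diagonal_mat D" using orth by (simp add: orthogonal_mat_def D_def Let_def)
  have "frob_inner (Us * W) (Us * W) = frob_inner (transpose_mat Us * (Us * W)) W"
    by (rule frob_inner_move_left) (use Us W in auto)
  also have "transpose_mat Us * (Us * W) = D * W"
    unfolding D_def using Us W by (subst assoc_mult_mat[of _ r d _ r _ m]) auto
  also have "frob_inner (D * W) W = (\<Sum>i<r. \<Sum>j<m. D $$ (i,i) * (W $$ (i,j))^2)"
    unfolding frob_inner_def using Dc W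
    by (auto intro!: sum.cong simp: diag_sum[OF diag Dc] power2_eq_square)
  also have "\<dots> \<ge> (\<Sum>i<r. \<Sum>j<m. \<sigma>2 * (W $$ (i,j))^2)"
    using sigma_bound[OF Us orth] by (auto intro!: sum_mono mult_right_mono simp: \<sigma>2_def D_def)
  also have "(\<Sum>i<r. \<Sum>j<m. \<sigma>2 * (W $$ (i,j))^2) = \<sigma>2 * frob_inner W W"
    unfolding frob_inner_def using W by (simp add: sum_distrib_left power2_eq_square)
  finally show ?thesis by (simp add: \<sigma>2_def)
qed

lemma submult: assumes De: "De \<in> carrier_mat d r"
  shows "frob_inner (transpose_mat De * De) (transpose_mat De * De) \<le> (frob_inner De De)^2"
proof -
  define c where "c i = (\<Sum>k<d. (De $$ (k,i))^2)" for i
  have "frob_inner (transpose_mat De * De) (transpose_mat De * De) = (\<Sum>i<r. \<Sum>j<r. (\<Sum>k<d. De $$ (k,i) * De $$ (k,j))^2)"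
    unfolding frob_inner_def using De by (auto intro!: sum.cong simp: power2_eq_square)
  also have "\<dots> \<le> (\<Sum>i<r. \<Sum>j<r. c i * c j)"
    unfolding c_def by (intro sum_mono cs_sum)
  also have "\<dots> = (\<Sum>i<r. c i)^2" by (simp add: power2_eq_square sum_product)
  also have "(\<Sum>i<r. c i) = frob_inner De De"
    unfolding frob_inner_def c_def using De by (simp add: power2_eq_square sum.swap[of _ "{..<r}"])
  finally show ?thesis .
qed

lemma opt_expand: assumes U: "U \<in> carrier_mat d r" and Y: "Y \<in> carrier_mat d r" and R: "R \<in> carrier_mat r r"
  and RR: "R * transpose_mat R = 1\<^sub>m r"
  shows "frob_inner (U - Y * R) (U - Y * R) = frob_inner U U - 2 * frob_inner (transpose_mat Y * U) R + frob_inner Y Y"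
proof -
  have YR: "Y * R \<in> carrier_mat d r" using Y R by simp
  have 1: "frob_inner U (Y * R) = frob_inner (transpose_mat Y * U) R" by (rule frob_inner_move_left[OF U Y R])
  have "frob_inner (Y * R) (Y * R) = frob_inner (Y * R * transpose_mat R) Y" by (rule frob_inner_move_right[OF YR Y R])
  also have "Y * R * transpose_mat R = Y * (R * transpose_mat R)" using Y R by (subst assoc_mult_mat) auto
  also have "\<dots> = Y" using RR Y by simp
  finally have 2: "frob_inner (Y * R) (Y * R) = frob_inner Y Y" .
  have 3: "frob_inner (Y * R) U = frob_inner U (Y * R)" by (rule frob_inner_sym[OF YR U])
  have "frob_inner (U - Y * R) (U - Y * R) = frob_inner U U - frob_inner U (Y * R) - frob_inner (Y * R) U + frob_inner (Y * R) (Y * R)"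
  proof -
    have UY: "U - Y * R \<in> carrier_mat d r" using YR by (rule minus_carrier_mat)
    show ?thesis
      unfolding frob_inner_minus_left[OF UY U YR] frob_inner_minus_right[OF U U YR] frob_inner_minus_right[OF YR U YR]
      by simp
  qed
  thus ?thesis using 1 2 3 by simp
qed


declare minus_carrier_mat[simp]

lemma tu:
  fixes X Y :: "real mat"
  assumes X: "X \<in> carrier_mat d n" and Y: "Y \<in> carrier_mat d n"
  and Ssym: "transpose_mat (transpose_mat Y * (X - Y)) = transpose_mat Y * (X - Y)"
  and cond: "frob_inner (transpose_mat (X - Y) * (X - Y)) (transpose_mat Y * X) \<ge> 0"
  shows "frob_inner (X * transpose_mat X - Y * transpose_mat Y) (X * transpose_mat X - Y * transpose_mat Y)
     \<ge> 2 * (sqrt 2 - 1) * frob_inner (transpose_mat (X - Y) * (X - Y)) (transpose_mat Y * Y)"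
proof -
  define De where "De = X - Y"
  have De: "De \<in> carrier_mat d n" using Y by (simp add: De_def)
  have DeT: "transpose_mat De \<in> carrier_mat n d" and YT: "transpose_mat Y \<in> carrier_mat n d" using De Y by auto
  define N where "N = transpose_mat De * De"
  define S where "S = transpose_mat Y * De"
  define H where "H = transpose_mat Y * Y"
  define Nd where "Nd = De * transpose_mat De"
  define A where "A = De * transpose_mat Y"
  define At where "At = Y * transpose_mat De"
  have cN: "N \<in> carrier_mat n n" and cS: "S \<in> carrier_mat n n" and cH: "H \<in> carrier_mat n n"
    and cNd: "Nd \<in> carrier_mat d d" and cA: "A \<in> carrier_mat d d" and cAt: "At \<in> carrier_mat d d"
    using De Y by (auto simp: N_def S_def H_def Nd_def A_def At_def)
  have Ssym': "transpose_mat S = S" using Ssym by (simp add: S_def De_def)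
  have ST: "transpose_mat S = transpose_mat De * Y" unfolding S_def using Y De by (simp add: transpose_mult)
  have F: "X * transpose_mat X - Y * transpose_mat Y = Nd + A + At"
  proof (rule eq_matI)
    fix i j assume i: "i < dim_row (Nd + A + At)" and j: "j < dim_col (Nd + A + At)"
    hence ij: "i < d" "j < d" using cAt by auto
    have "(X * transpose_mat X - Y * transpose_mat Y) $$ (i,j) = (\<Sum>l<n. X $$ (i,l) * X $$ (j,l) - Y $$ (i,l) * Y $$ (j,l))"
      using X Y ij by (simp add: sum_subtractf)
    also have "\<dots> = (\<Sum>l<n. (X $$ (i,l) - Y $$ (i,l)) * (X $$ (j,l) - Y $$ (j,l)) + (X $$ (i,l) - Y $$ (i,l)) * Y $$ (j,l)
        + Y $$ (i,l) * (X $$ (j,l) - Y $$ (j,l)))"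
      by (intro sum.cong refl) (simp add: algebra_simps)
    also have "\<dots> = (Nd + A + At) $$ (i,j)"
      using X Y ij by (simp add: Nd_def A_def At_def De_def sum.distrib)
    finally show "(X * transpose_mat X - Y * transpose_mat Y) $$ (i,j) = (Nd + A + At) $$ (i,j)" .
  qed (use X Y cAt in auto)
  have YX: "transpose_mat Y * X = H + S"
  proof (rule eq_matI)
    fix i j assume i: "i < dim_row (H + S)" and j: "j < dim_col (H + S)"
    hence ij: "i < n" "j < n" using cS by auto
    have "(transpose_mat Y * X) $$ (i,j) = (\<Sum>l<d. Y $$ (l,i) * X $$ (l,j))" using X Y ij by simp
    also have "\<dots> = (\<Sum>l<d. Y $$ (l,i) * Y $$ (l,j) + Y $$ (l,i) * (X $$ (l,j) - Y $$ (l,j)))"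
      by (intro sum.cong refl) (simp add: algebra_simps)
    also have "\<dots> = (H + S) $$ (i,j)" using X Y ij by (simp add: H_def S_def De_def sum.distrib)
    finally show "(transpose_mat Y * X) $$ (i,j) = (H + S) $$ (i,j)" .
  qed (use X Y cS in auto)
  have s1: "frob_inner A Nd = frob_inner Nd A" by (rule frob_inner_sym[OF cA cNd])
  have s2: "frob_inner At Nd = frob_inner Nd At" by (rule frob_inner_sym[OF cAt cNd])
  have s3: "frob_inner At A = frob_inner A At" by (rule frob_inner_sym[OF cAt cA])
  have FF: "frob_inner (Nd + A + At) (Nd + A + At) = frob_inner Nd Nd + frob_inner A A + frob_inner At At
      + 2 * frob_inner Nd A + 2 * frob_inner Nd At + 2 * frob_inner A At"
    using cNd cA cAt
    by (simp add: frob_inner_add_left[of _ d d] frob_inner_add_right[of _ d d] s1 s2 s3)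
  have e1: "frob_inner Nd Nd = frob_inner N N"
  proof -
    have "frob_inner Nd Nd = frob_inner (Nd * De) De"
      unfolding Nd_def[of] using frob_inner_move_right[OF cNd De DeT] by (simp add: Nd_def)
    moreover have "frob_inner N N = frob_inner (De * N) De"
      using frob_inner_move_left[OF cN DeT De] by (simp add: N_def)
    moreover have "De * N = Nd * De" unfolding N_def Nd_def using De by (simp add: assoc_mult_mat[of _ d n _ d _ n])
    ultimately show ?thesis by simp
  qed
  have e2: "frob_inner A A = frob_inner N H"
  proof -
    have "frob_inner A A = frob_inner (A * Y) De"
      using frob_inner_move_right[OF cA De YT] by (simp add: A_def)
    moreover have "frob_inner N H = frob_inner (De * H) De"
      using frob_inner_move_left[OF cH DeT De] frob_inner_sym[OF cN cH] by (simp add: N_def)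
    moreover have "A * Y = De * H" unfolding A_def H_def using De Y by (simp add: assoc_mult_mat[of _ d n _ d _ n])
    ultimately show ?thesis by simp
  qed
  have AtT: "At = transpose_mat A" unfolding At_def A_def using De Y by (simp add: transpose_mult)
  have e3: "frob_inner At At = frob_inner A A" unfolding AtT by (rule frob_inner_transp[OF cA cA])
  have e4: "frob_inner Nd A = frob_inner N S"
  proof -
    have "frob_inner Nd A = frob_inner (Nd * Y) De"
      using frob_inner_move_right[OF cNd De YT] by (simp add: A_def)
    moreover have "frob_inner N S = frob_inner (De * S) De"
      using frob_inner_move_left[OF cS DeT De] frob_inner_sym[OF cN cS] by (simp add: N_def)
    moreover have "De * S = Nd * Y"
    proof -
      have "De * S = De * transpose_mat S" using Ssym' by simp
      also have "\<dots> = Nd * Y" unfolding ST Nd_def using De Y by (simp add: assoc_mult_mat[of _ d n _ d _ n])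
      finally show ?thesis .
    qed
    ultimately show ?thesis by simp
  qed
  have NdT: "transpose_mat Nd = Nd" unfolding Nd_def using De by (simp add: transpose_mult)
  have e5: "frob_inner Nd At = frob_inner Nd A"
    using frob_inner_transp[OF cNd cAt] unfolding NdT AtT by simp
  have e6: "frob_inner A At = frob_inner S S"
  proof -
    have "frob_inner A At = frob_inner (A * De) Y"
      using frob_inner_move_right[OF cA Y DeT] by (simp add: At_def)
    moreover have "frob_inner S S = frob_inner (De * S) Y"
    proof -
      have "frob_inner S S = frob_inner S (transpose_mat De * Y)" using Ssym' ST by simp
      also have "\<dots> = frob_inner (De * S) Y" using frob_inner_move_left[OF cS DeT Y] by simp
      finally show ?thesis .
    qed
    moreover have "A * De = De * S" unfolding A_def S_def using De Y by (simp add: assoc_mult_mat[of _ d n _ d _ n])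
    ultimately show ?thesis by simp
  qed
  have c2: "frob_inner N H + frob_inner N S \<ge> 0"
    using cond unfolding De_def[symmetric] N_def[symmetric] YX
    using frob_inner_add_right[OF cN cH cS] by simp
  define t where "t = sqrt (2::real)"
  have tt: "t * t = 2" by (simp add: t_def)
  have t2: "t \<le> 2" unfolding t_def by (rule real_sqrt_le_iff[THEN iffD2, of 2 4, simplified]) 
  have sq: "0 \<le> frob_inner N N + 2 * t * frob_inner N S + 2 * frob_inner S S"
  proof -
    have cSt: "t \<cdot>\<^sub>m S \<in> carrier_mat n n" using cS by simp
    have "0 \<le> frob_inner (N + t \<cdot>\<^sub>m S) (N + t \<cdot>\<^sub>m S)" by (rule frob_inner_self_nonneg)
    also have "\<dots> = frob_inner N N + t * frob_inner N S + t * frob_inner S N + t * t * frob_inner S S"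
      using cN cS cSt
      by (simp add: frob_inner_add_left[of _ n n] frob_inner_add_right[of _ n n]
          frob_inner_smult_left[of _ n n] frob_inner_smult_right[of _ n n] algebra_simps)
    also have "frob_inner S N = frob_inner N S" by (rule frob_inner_sym[OF cS cN])
    finally show ?thesis using tt by (simp add: algebra_simps)
  qed
  have "(4 - 2 * t) * (frob_inner N H + frob_inner N S) \<ge> 0" using c2 t2 by simp
  hence lin: "4 * frob_inner N H + 4 * frob_inner N S - 2 * (t * frob_inner N H) - 2 * (t * frob_inner N S) \<ge> 0"
    by (simp add: algebra_simps)
  have goal: "frob_inner Nd Nd + frob_inner A A + frob_inner At At + 2 * frob_inner Nd A + 2 * frob_inner Nd At + 2 * frob_inner A At
      \<ge> 2 * (t - 1) * frob_inner N H"
    unfolding e1 e2 e3 e5 e4 e6 using sq lin by (simp add: algebra_simps)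
  show ?thesis unfolding F FF unfolding De_def[symmetric] N_def[symmetric] H_def[symmetric]
    using goal by (simp add: t_def)
qed


definition j1 :: "nat \<Rightarrow> nat \<Rightarrow> real" where "j1 r1 i = (if i < r1 then 1 else 0)"
definition j2 :: "nat \<Rightarrow> nat \<Rightarrow> real" where "j2 r1 i = (if i < r1 then 0 else 1)"

lemma ZLZ: assumes Z: "Z \<in> carrier_mat d r" and r1: "r1 \<le> r"
  shows "Z * Lam r r1 * transpose_mat Z = (Z * dg r (j1 r1)) * transpose_mat (Z * dg r (j1 r1))
     - (Z * dg r (j2 r1)) * transpose_mat (Z * dg r (j2 r1))"
proof (rule eq_matI)
  fix a b assume a: "a < dim_row ((Z * dg r (j1 r1)) * transpose_mat (Z * dg r (j1 r1))
     - (Z * dg r (j2 r1)) * transpose_mat (Z * dg r (j2 r1)))"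
    and b: "b < dim_col ((Z * dg r (j1 r1)) * transpose_mat (Z * dg r (j1 r1))
     - (Z * dg r (j2 r1)) * transpose_mat (Z * dg r (j2 r1)))"
  hence ab: "a < d" "b < d" using Z by auto
  have "(Z * Lam r r1 * transpose_mat Z) $$ (a,b) = (\<Sum>l<r. Z $$ (a,l) * lam r1 l * Z $$ (b,l))"
    using Z ab r1 by (simp add: Lam_dg)
  also have "\<dots> = (\<Sum>l<r. Z $$ (a,l) * j1 r1 l * (Z $$ (b,l) * j1 r1 l) - Z $$ (a,l) * j2 r1 l * (Z $$ (b,l) * j2 r1 l))"
    by (intro sum.cong refl) (simp add: lam_def j1_def j2_def)
  also have "\<dots> = ((Z * dg r (j1 r1)) * transpose_mat (Z * dg r (j1 r1))
     - (Z * dg r (j2 r1)) * transpose_mat (Z * dg r (j2 r1))) $$ (a,b)"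
    using Z ab by (simp add: sum_subtractf)
  finally show "(Z * Lam r r1 * transpose_mat Z) $$ (a,b) = ((Z * dg r (j1 r1)) * transpose_mat (Z * dg r (j1 r1))
     - (Z * dg r (j2 r1)) * transpose_mat (Z * dg r (j2 r1))) $$ (a,b)" .
qed (use Z r1 in auto)

lemma gram: assumes A: "A \<in> carrier_mat d r" and B: "B \<in> carrier_mat d r'"
  shows "frob_inner (A * transpose_mat A) (B * transpose_mat B) = frob_inner (transpose_mat A * B) (transpose_mat A * B)"
proof -
  have AA: "A * transpose_mat A \<in> carrier_mat d d" and AB: "transpose_mat A * B \<in> carrier_mat r r'" using A B by auto
  have "frob_inner (A * transpose_mat A) (B * transpose_mat B) = frob_inner (A * transpose_mat A * B) B"
    using frob_inner_move_right[OF AA B, of "transpose_mat B"] B by simp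
  also have "A * transpose_mat A * B = A * (transpose_mat A * B)" using A B by (simp add: assoc_mult_mat[of _ d r _ d _ r'])
  also have "frob_inner (A * (transpose_mat A * B)) B = frob_inner B (A * (transpose_mat A * B))"
    using A B by (intro frob_inner_sym) auto
  also have "\<dots> = frob_inner (transpose_mat A * B) (transpose_mat A * B)" by (rule frob_inner_move_left[OF B A AB])
  finally show ?thesis .
qed

lemma gram2: assumes A: "A \<in> carrier_mat d r" and B: "B \<in> carrier_mat d r"
  shows "frob_inner (transpose_mat A * A) (transpose_mat B * B) = frob_inner (B * transpose_mat A) (B * transpose_mat A)"
proof -
  have AA: "transpose_mat A * A \<in> carrier_mat r r" and BT: "transpose_mat B \<in> carrier_mat r d"
   and BA: "B * transpose_mat A \<in> carrier_mat d d" using A B by auto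
  have "frob_inner (transpose_mat A * A) (transpose_mat B * B) = frob_inner (B * (transpose_mat A * A)) B"
    using frob_inner_move_left[OF AA BT B] by simp
  also have "B * (transpose_mat A * A) = B * transpose_mat A * A" using A B by (simp add: assoc_mult_mat[of _ d r _ d _ r])
  also have "frob_inner (B * transpose_mat A * A) B = frob_inner B (B * transpose_mat A * A)"
    using A B by (intro frob_inner_sym) auto
  also have "\<dots> = frob_inner (B * transpose_mat A) (B * transpose_mat A)"
    using frob_inner_move_right[OF B BA A] by simp
  finally show ?thesis .
qed

lemma orth_norm: assumes Q: "Q \<in> carrier_mat r r" and QQ: "transpose_mat Q * Q = 1\<^sub>m r" and V: "V \<in> carrier_mat r m"
  shows "frob_inner (Q * V) (Q * V) = frob_inner V V"
proof -
  have "frob_inner (Q * V) (Q * V) = frob_inner (transpose_mat Q * (Q * V)) V"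
    using Q V by (intro frob_inner_move_left) auto
  also have "transpose_mat Q * (Q * V) = V" using Q V QQ by (simp add: assoc_mult_mat[of _ r r _ r _ m, symmetric])
  finally show ?thesis .
qed

lemma frob_zero: "(\<And>i j. i < dim_row A \<Longrightarrow> j < dim_col A \<Longrightarrow> A $$ (i,j) = 0) \<Longrightarrow> frob_inner A A = 0"
  unfolding frob_inner_def by simp

lemma split_J: assumes De: "De \<in> carrier_mat d r"
  shows "frob_inner (De * dg r (j1 r1)) (De * dg r (j1 r1)) + frob_inner (De * dg r (j2 r1)) (De * dg r (j2 r1)) = frob_inner De De"
proof -
  have "frob_inner (De * dg r (j1 r1)) (De * dg r (j1 r1)) + frob_inner (De * dg r (j2 r1)) (De * dg r (j2 r1))
     = (\<Sum>i<d. \<Sum>j<r. De $$ (i,j) * j1 r1 j * (De $$ (i,j) * j1 r1 j) + De $$ (i,j) * j2 r1 j * (De $$ (i,j) * j2 r1 j))"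
    unfolding frob_inner_def using De by (simp add: sum.distrib)
  also have "\<dots> = (\<Sum>i<d. \<Sum>j<r. De $$ (i,j) * De $$ (i,j))"
    by (intro sum.cong refl) (simp add: j1_def j2_def)
  also have "\<dots> = frob_inner De De" unfolding frob_inner_def using De by simp
  finally show ?thesis .
qed

lemma V_norm: assumes De: "De \<in> carrier_mat d r" and f: "\<And>i. f i * f i = f i"
  shows "frob_inner (dg r f * transpose_mat (De * dg r f)) (dg r f * transpose_mat (De * dg r f)) = frob_inner (De * dg r f) (De * dg r f)"
proof -
  have p1: "f i * (x * f i) * (f i * (x * f i)) = x * x * f i" for i x
  proof -
    have "f i * (x * f i) * (f i * (x * f i)) = x * x * ((f i * f i) * (f i * f i))" by (simp only: mult_ac)
    thus ?thesis by (simp add: f)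
  qed
  have p2: "x * f i * (x * f i) = x * x * f i" for i x
  proof -
    have "x * f i * (x * f i) = x * x * (f i * f i)" by (simp only: mult_ac)
    thus ?thesis by (simp add: f)
  qed
  have "frob_inner (dg r f * transpose_mat (De * dg r f)) (dg r f * transpose_mat (De * dg r f))
      = (\<Sum>i<r. \<Sum>j<d. (dg r f * transpose_mat (De * dg r f)) $$ (i,j) * (dg r f * transpose_mat (De * dg r f)) $$ (i,j))"
    unfolding frob_inner_def using De by simp
  also have "\<dots> = (\<Sum>i<r. \<Sum>j<d. De $$ (j,i) * De $$ (j,i) * f i)"
    using De by (intro sum.cong refl) (simp add: p1)
  also have "\<dots> = (\<Sum>j<d. \<Sum>i<r. De $$ (j,i) * De $$ (j,i) * f i)" by (rule sum.swap)
  also have "\<dots> = (\<Sum>j<d. \<Sum>i<r. (De * dg r f) $$ (j,i) * (De * dg r f) $$ (j,i))"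
    using De by (intro sum.cong refl) (simp add: p2)
  also have "\<dots> = frob_inner (De * dg r f) (De * dg r f)"
    unfolding frob_inner_def using De by simp
  finally show ?thesis .
qed


lemma swap3: "(\<Sum>i\<in>A. \<Sum>j\<in>B. \<Sum>k\<in>C. g i j k) = (\<Sum>k\<in>C. \<Sum>i\<in>A. \<Sum>j\<in>B. (g i j k :: real))"
proof -
  have "(\<Sum>i\<in>A. \<Sum>j\<in>B. \<Sum>k\<in>C. g i j k) = (\<Sum>i\<in>A. \<Sum>k\<in>C. \<Sum>j\<in>B. g i j k)"
    by (rule sum.cong, simp, rule sum.swap)
  also have "\<dots> = (\<Sum>k\<in>C. \<Sum>i\<in>A. \<Sum>j\<in>B. g i j k)" by (rule sum.swap)
  finally show ?thesis .
qed

lemma block_tu: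
  fixes f :: "nat \<Rightarrow> real"
  assumes Us: "Us \<in> carrier_mat d r" and orth: "orthogonal_mat Us" and U: "U \<in> carrier_mat d r"
  and Q: "Q \<in> carrier_mat r r" and QQ: "transpose_mat Q * Q = 1\<^sub>m r"
  and opt: "optP (transpose_mat (Us * Q) * U) r r1"
  and fidem: "\<And>i. f i * f i = f i" and fsupp: "\<And>i j. f i \<noteq> 0 \<Longrightarrow> f j \<noteq> 0 \<Longrightarrow> (i < r1) = (j < r1)"
  shows "frob_inner ((U * dg r f) * transpose_mat (U * dg r f) - (Us * Q * dg r f) * transpose_mat (Us * Q * dg r f))
                    ((U * dg r f) * transpose_mat (U * dg r f) - (Us * Q * dg r f) * transpose_mat (Us * Q * dg r f))
    \<ge> 2 * (sqrt 2 - 1) * (smallest_singular_value Us)^2 * frob_inner ((U - Us * Q) * dg r f) ((U - Us * Q) * dg r f)"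
proof -
  define Y where "Y = Us * Q"
  define F where "F = dg r f"
  define De where "De = U - Y"
  define P where "P = transpose_mat Y * U"
  define H where "H = transpose_mat Y * Y"
  interpret optP P r r1 using opt by (simp add: P_def Y_def)
  have Yc: "Y \<in> carrier_mat d r" using Us Q by (simp add: Y_def)
  have Fc: "F \<in> carrier_mat r r" by (simp add: F_def)
  have Dec: "De \<in> carrier_mat d r" using Yc by (simp add: De_def)
  have XY: "U * F - Y * F = De * F" unfolding De_def using U Yc Fc by (simp add: minus_mult_distrib_mat[of _ d r])
  have UFc: "U * F \<in> carrier_mat d r" and YFc: "Y * F \<in> carrier_mat d r" and DFc: "De * F \<in> carrier_mat d r"
    using U Yc Dec Fc by auto
  have Uent: "U $$ (k,i) = Y $$ (k,i) + De $$ (k,i)" if "k < d" "i < r" for k i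
    using that U Yc by (simp add: De_def)
  have Pent: "P $$ (i,j) = (\<Sum>k<d. Y $$ (k,i) * U $$ (k,j))" if "i < r" "j < r" for i j
    using that U Yc by (simp add: P_def)
  have Hsym: "(\<Sum>k<d. Y $$ (k,i) * Y $$ (k,j)) = (\<Sum>k<d. Y $$ (k,j) * Y $$ (k,i))" for i j
    by (simp add: mult.commute)
  have Sent: "(transpose_mat (Y * F) * (De * F)) $$ (i,j) = f i * f j * (P $$ (i,j) - (\<Sum>k<d. Y $$ (k,i) * Y $$ (k,j)))"
    if "i < r" "j < r" for i j
  proof -
    have "(transpose_mat (Y * F) * (De * F)) $$ (i,j) = (\<Sum>k<d. Y $$ (k,i) * f i * (De $$ (k,j) * f j))"
      using that Yc Dec by (simp add: F_def)
    also have "\<dots> = f i * f j * (\<Sum>k<d. Y $$ (k,i) * U $$ (k,j) - Y $$ (k,i) * Y $$ (k,j))"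
      using U Yc that by (simp add: sum_distrib_left De_def algebra_simps)
    also have "\<dots> = f i * f j * (P $$ (i,j) - (\<Sum>k<d. Y $$ (k,i) * Y $$ (k,j)))"
      using that by (simp add: Pent sum_subtractf)
    finally show ?thesis .
  qed
  have Ssym: "transpose_mat (transpose_mat (Y * F) * (U * F - Y * F)) = transpose_mat (Y * F) * (U * F - Y * F)"
    unfolding XY
  proof (rule eq_matI)
    fix i j assume i: "i < dim_row (transpose_mat (Y * F) * (De * F))" and j: "j < dim_col (transpose_mat (Y * F) * (De * F))"
    hence ij: "i < r" "j < r" using Yc Dec Fc by auto
    have tr: "transpose_mat (transpose_mat (Y * F) * (De * F)) $$ (i,j) = (transpose_mat (Y * F) * (De * F)) $$ (j,i)"
      by (rule index_transpose_mat(1)) (use ij Yc Dec Fc in auto)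
    show "transpose_mat (transpose_mat (Y * F) * (De * F)) $$ (i,j) = (transpose_mat (Y * F) * (De * F)) $$ (i,j)"
    proof (cases "f i = 0 \<or> f j = 0")
      case True thus ?thesis unfolding tr Sent[OF ij(2) ij(1)] Sent[OF ij] by auto
    next
      case False
      hence "(i < r1) = (j < r1)" using fsupp by auto
      hence "P $$ (j,i) = P $$ (i,j)" using P_sym ij by auto
      thus ?thesis unfolding tr Sent[OF ij(2) ij(1)] Sent[OF ij] by (simp add: Hsym mult.commute)
    qed
  qed (use Yc Dec Fc in auto)
  have cond: "frob_inner (transpose_mat (U * F - Y * F) * (U * F - Y * F)) (transpose_mat (Y * F) * (U * F)) \<ge> 0"
    unfolding XY
  proof -
    define w where "w k i = De $$ (k,i) * f i" for k i
    have pw: "(transpose_mat (De * F) * (De * F)) $$ (i,j) * (transpose_mat (Y * F) * (U * F)) $$ (i,j)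
       = (\<Sum>k<d. w k i * P $$ (i,j) * w k j)" if "i < r" "j < r" for i j
    proof -
      have e1: "(transpose_mat (De * F) * (De * F)) $$ (i,j) = (\<Sum>k<d. De $$ (k,i) * f i * (De $$ (k,j) * f j))"
        using that Dec by (simp add: F_def)
      have e2: "(transpose_mat (Y * F) * (U * F)) $$ (i,j) = f i * f j * P $$ (i,j)"
        using that Yc U by (simp add: F_def Pent sum_distrib_left algebra_simps)
      have e3: "De $$ (k,i) * f i * (De $$ (k,j) * f j) * (f i * f j * P $$ (i,j)) = w k i * P $$ (i,j) * w k j" for k
      proof -
        have "De $$ (k,i) * f i * (De $$ (k,j) * f j) * (f i * f j * P $$ (i,j))
           = De $$ (k,i) * (f i * f i) * P $$ (i,j) * (De $$ (k,j) * (f j * f j))" by (simp only: mult_ac)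
        thus ?thesis by (simp add: fidem w_def)
      qed
      show ?thesis unfolding e1 e2 sum_distrib_right e3 ..
    qed
    have "frob_inner (transpose_mat (De * F) * (De * F)) (transpose_mat (Y * F) * (U * F))
        = (\<Sum>i<r. \<Sum>j<r. (transpose_mat (De * F) * (De * F)) $$ (i,j) * (transpose_mat (Y * F) * (U * F)) $$ (i,j))"
      unfolding frob_inner_def using Dec Fc by simp
    also have "\<dots> = (\<Sum>i<r. \<Sum>j<r. \<Sum>k<d. w k i * P $$ (i,j) * w k j)"
      by (intro sum.cong refl) (simp add: pw)
    also have "\<dots> = (\<Sum>k<d. \<Sum>i<r. \<Sum>j<r. w k i * P $$ (i,j) * w k j)" by (rule swap3)
    also have "\<dots> \<ge> 0"
    proof (rule sum_nonneg)
      fix k assume "k \<in> {..<d}"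
      have "wsupp r1 r (w k)" unfolding wsupp_def w_def using fsupp by auto
      thus "0 \<le> (\<Sum>i<r. \<Sum>j<r. w k i * P $$ (i,j) * w k j)" by (rule quad_nonneg)
    qed
    finally show "frob_inner (transpose_mat (De * F) * (De * F)) (transpose_mat (Y * F) * (U * F)) \<ge> 0" .
  qed
  have T: "frob_inner ((U * F) * transpose_mat (U * F) - (Y * F) * transpose_mat (Y * F))
                    ((U * F) * transpose_mat (U * F) - (Y * F) * transpose_mat (Y * F))
     \<ge> 2 * (sqrt 2 - 1) * frob_inner (transpose_mat (U * F - Y * F) * (U * F - Y * F)) (transpose_mat (Y * F) * (Y * F))"
    by (rule tu[OF UFc YFc Ssym cond])
  define V where "V = F * transpose_mat (De * F)"
  have Vc: "V \<in> carrier_mat r d" using Fc Dec by (simp add: V_def)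
  have "frob_inner (transpose_mat (U * F - Y * F) * (U * F - Y * F)) (transpose_mat (Y * F) * (Y * F))
     = frob_inner ((Y * F) * transpose_mat (De * F)) ((Y * F) * transpose_mat (De * F))"
    unfolding XY by (rule gram2[OF DFc YFc])
  also have "(Y * F) * transpose_mat (De * F) = Us * (Q * V)"
    unfolding Y_def V_def using Us Q Fc Dec by (simp add: assoc_mult_mat[of _ d r _ r _ d] assoc_mult_mat[of _ d r _ r _ r] assoc_mult_mat[of _ r r _ r _ d])
  also have "frob_inner (Us * (Q * V)) (Us * (Q * V)) \<ge> (smallest_singular_value Us)^2 * frob_inner (Q * V) (Q * V)"
    using Q Vc by (intro LUs[OF Us orth]) auto
  also have "frob_inner (Q * V) (Q * V) = frob_inner V V" by (rule orth_norm[OF Q QQ Vc])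
  also have "frob_inner V V = frob_inner (De * F) (De * F)" unfolding V_def F_def by (rule V_norm[OF Dec fidem])
  finally have low: "frob_inner (transpose_mat (U * F - Y * F) * (U * F - Y * F)) (transpose_mat (Y * F) * (Y * F))
     \<ge> (smallest_singular_value Us)^2 * frob_inner (De * F) (De * F)" .
  have comb: "2 * (sqrt 2 - 1) * ((smallest_singular_value Us)^2 * frob_inner (De * F) (De * F))
     \<le> 2 * (sqrt 2 - 1) * frob_inner (transpose_mat (U * F - Y * F) * (U * F - Y * F)) (transpose_mat (Y * F) * (Y * F))"
    by (rule mult_left_mono[OF low]) simp
  from order_trans[OF comb T]
  show ?thesis unfolding Y_def[symmetric] F_def[symmetric] De_def[symmetric] by (simp only: mult.assoc)
qed


declare minus_carrier_mat[simp]

theorem lemmaE: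
  fixes Us U Q :: "real mat" and d r r1 :: nat
  assumes Us: "Us \<in> carrier_mat d r" and orth: "orthogonal_mat Us"
    and U: "U \<in> carrier_mat d r"
    and r1: "r1 \<le> r"
    and Q: "Q \<in> Qblock r r1"
    and Qmin: "frob_norm (U - Us * Q) = Pi_dist r1 U Us"
  defines "\<sigma> \<equiv> smallest_singular_value Us"
    and "M \<equiv> transpose_mat U * U - (Lam r r1) * transpose_mat U * U * (Lam r r1)"
    and "Pd \<equiv> Pi_dist r1 U Us"
    and "E \<equiv> U * (Lam r r1) * transpose_mat U - Us * (Lam r r1) * transpose_mat Us"
  shows "frob_inner (U - Us * Q) (U * M) \<ge> (1/8) * (frob_norm M)^2 - (1/2) * Pd^4 \<and>
         (frob_norm M)^2 \<ge> 8 * (sqrt 2 - 1) * \<sigma>^2 * Pd^2 - 4 * (frob_norm E)^2 \<and>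
         frob_inner (U - Us * Q) (U * M) \<ge>
           (sqrt 2 - 1) * \<sigma>^2 * Pd^2 - (1/2) * (frob_norm E)^2 - (1/2) * Pd^4"

proof -
  define L where "L = Lam r r1"
  have Ldg: "L = dg r (lam r1)" unfolding L_def by (rule Lam_dg[OF r1])
  have Lc: "L \<in> carrier_mat r r" by (simp add: Ldg)
  have Qp: "Q \<in> carrier_mat r r" "transpose_mat Q * Q = 1\<^sub>m r" "blockz r1 Q"
    using Q Qblock_iff[OF r1] by auto
  have QQt: "Q * transpose_mat Q = 1\<^sub>m r"
    by (rule mat_mult_left_right_inverse[of "transpose_mat Q" r Q]) (use Qp in auto)
  define Y where "Y = Us * Q"
  define De where "De = U - Y"
  define P where "P = transpose_mat Y * U"
  define G where "G = transpose_mat U * U"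
  define H where "H = transpose_mat Y * Y"
  define S where "S = transpose_mat Y * De"
  define N where "N = transpose_mat De * De"
  have Yc: "Y \<in> carrier_mat d r" using Us Qp by (simp add: Y_def)
  have Dec: "De \<in> carrier_mat d r" using Yc by (simp add: De_def)
  have Pc: "P \<in> carrier_mat r r" and Gc: "G \<in> carrier_mat r r" and Hc: "H \<in> carrier_mat r r"
    and Sc: "S \<in> carrier_mat r r" and Nc: "N \<in> carrier_mat r r"
    using U Yc Dec by (auto simp: P_def G_def H_def S_def N_def)
  have PdDe: "Pd = frob_norm De" unfolding Pd_def De_def Y_def using Qmin by simp
  have Pd2: "Pd^2 = frob_inner De De" unfolding PdDe by (rule frob_norm_sq)
  have opt: "frob_inner P R \<le> frob_inner P (1\<^sub>m r)" if R: "R \<in> Qblock r r1" for R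
  proof -
    have QR: "Q * R \<in> Qblock r r1" by (rule Qblock_mult[OF r1 Q R])
    have Rp: "R \<in> carrier_mat r r" "transpose_mat R * R = 1\<^sub>m r" using R Qblock_iff[OF r1] by auto
    have RRt: "R * transpose_mat R = 1\<^sub>m r"
      by (rule mat_mult_left_right_inverse[of "transpose_mat R" r R]) (use Rp in auto)
    have bdd: "bdd_below ((\<lambda>Q. frob_norm (U - Us * Q)) ` Qblock (dim_col Us) r1)"
      by (rule bdd_belowI[of _ 0]) (auto simp: frob_norm_nonneg)
    have "Pi_dist r1 U Us \<le> frob_norm (U - Us * (Q * R))"
      unfolding Pi_dist_def using Us QR by (auto intro!: cINF_lower[OF bdd])
    also have "Us * (Q * R) = Y * R" unfolding Y_def using Us Qp Rp by (simp add: assoc_mult_mat[of _ d r _ r _ r])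
    finally have "frob_norm De \<le> frob_norm (U - Y * R)" using PdDe Pd_def by simp
    hence "(frob_norm De)^2 \<le> (frob_norm (U - Y * R))^2" by (rule power_mono) (simp add: frob_norm_nonneg)
    hence le: "frob_inner De De \<le> frob_inner (U - Y * R) (U - Y * R)" by (simp add: frob_norm_sq)
    have e1: "frob_inner (U - Y * R) (U - Y * R) = frob_inner U U - 2 * frob_inner P R + frob_inner Y Y"
      unfolding P_def by (rule opt_expand[OF U Yc Rp(1) RRt])
    have "De = U - Y * 1\<^sub>m r" using Yc by (simp add: De_def)
    hence e2: "frob_inner De De = frob_inner U U - 2 * frob_inner P (1\<^sub>m r) + frob_inner Y Y"
      unfolding P_def using opt_expand[OF U Yc one_carrier_mat] by simp
    show ?thesis using le e1 e2 by simp
  qed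
  have optPP: "optP P r r1" by unfold_locales (use Pc r1 opt in auto)
  interpret optP P r r1 by (rule optPP)
  have Hblock: "blockz r1 H"
  proof -
    define D where "D = transpose_mat Us * Us"
    have Dc: "D \<in> carrier_mat r r" using Us by (simp add: D_def)
    have "H = transpose_mat Q * (transpose_mat Us * (Us * Q))"
      unfolding H_def Y_def using Us Qp by (simp add: transpose_mult assoc_mult_mat[of _ r d _ d _ r] assoc_mult_mat[of _ r r _ d _ r])
    also have "transpose_mat Us * (Us * Q) = D * Q" unfolding D_def using Us Qp by (simp add: assoc_mult_mat[of _ r d _ d _ r])
    finally have Heq: "H = transpose_mat Q * (D * Q)" .
    have bD: "blockz r1 D"
      using orth unfolding orthogonal_mat_def Let_def diagonal_mat_def blockz_def D_def by auto
    have bDQ: "blockz r1 (D * Q)" by (rule blockz_mult[OF Dc Qp(1) bD Qp(3)])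
    show ?thesis unfolding Heq
      by (rule blockz_mult[of _ r r _ r]) (use Qp Dc bDQ blockz_transpose in auto)
  qed
  have Hz: "H $$ (i,j) = 0" if "i < r" "j < r" "(i < r1) \<noteq> (j < r1)" for i j
    using Hblock Hc that unfolding blockz_def by auto
  have Uent: "U $$ (k,i) = Y $$ (k,i) + De $$ (k,i)" if "k < d" "i < r" for k i
    using that U Yc by (simp add: De_def)
  have Gent: "G $$ (i,j) = H $$ (i,j) + S $$ (i,j) + S $$ (j,i) + N $$ (i,j)" if "i < r" "j < r" for i j
  proof -
    have "G $$ (i,j) = (\<Sum>k<d. U $$ (k,i) * U $$ (k,j))" using that U by (simp add: G_def)
    also have "\<dots> = (\<Sum>k<d. Y $$ (k,i) * Y $$ (k,j) + Y $$ (k,i) * De $$ (k,j) + Y $$ (k,j) * De $$ (k,i) + De $$ (k,i) * De $$ (k,j))"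
      using that by (intro sum.cong refl) (simp add: Uent algebra_simps)
    also have "\<dots> = H $$ (i,j) + S $$ (i,j) + S $$ (j,i) + N $$ (i,j)"
      using that Yc Dec by (simp add: H_def S_def N_def sum.distrib)
    finally show ?thesis .
  qed
  have Gsym: "G $$ (j,i) = G $$ (i,j)" if "i < r" "j < r" for i j
    using that U by (simp add: G_def mult.commute)
  define mu where "mu i j = 1 - lam r1 i * lam r1 j" for i j
  have Ment: "M $$ (i,j) = mu i j * G $$ (i,j)" if ij: "i < r" "j < r" for i j
  proof -
    have "L * transpose_mat U * U = L * G" unfolding G_def using U Lc by (simp add: assoc_mult_mat[of _ r r _ d _ r])
    hence "M = G - L * G * L" unfolding M_def G_def L_def by simp
    thus ?thesis using ij Gc by (simp add: Ldg mu_def algebra_simps)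
  qed
  have Msym: "M $$ (j,i) = M $$ (i,j)" if "i < r" "j < r" for i j
    using that Ment Gsym by (simp add: mu_def mult.commute)
  have Ment2: "M $$ (i,j) = mu i j * (S $$ (i,j) + S $$ (j,i) + N $$ (i,j))" if ij: "i < r" "j < r" for i j
  proof -
    have "mu i j * H $$ (i,j) = 0" using Hz[OF ij] by (cases "i < r1"; cases "j < r1") (auto simp: mu_def lam_def)
    thus ?thesis using Ment[OF ij] Gent[OF ij] by (simp add: algebra_simps)
  qed
  have Mc: "M \<in> carrier_mat r r" unfolding M_def using U Lam_carrier[OF r1] by (intro minus_carrier_mat mult_carrier_mat) auto
  have UtDe: "transpose_mat U * De = S + N"
  proof (rule eq_matI)
    fix i j assume "i < dim_row (S + N)" "j < dim_col (S + N)"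
    hence ij: "i < r" "j < r" using Nc by auto
    have "(transpose_mat U * De) $$ (i,j) = (\<Sum>k<d. U $$ (k,i) * De $$ (k,j))" using ij U Dec by simp
    also have "\<dots> = (\<Sum>k<d. Y $$ (k,i) * De $$ (k,j) + De $$ (k,i) * De $$ (k,j))"
      using ij by (intro sum.cong refl) (simp add: Uent algebra_simps)
    also have "\<dots> = (S + N) $$ (i,j)" using ij Yc Dec by (simp add: S_def N_def sum.distrib)
    finally show "(transpose_mat U * De) $$ (i,j) = (S + N) $$ (i,j)" .
  qed (use U Nc Dec in auto)
  have Tform: "frob_inner (U - Us * Q) (U * M) = frob_inner S M + frob_inner N M"
  proof -
    have "frob_inner (U - Us * Q) (U * M) = frob_inner (transpose_mat U * De) M"
      unfolding De_def[unfolded Y_def, symmetric] by (rule frob_inner_move_left[OF Dec U Mc])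
    thus ?thesis unfolding UtDe using frob_inner_add_left[OF Mc Sc Nc] by simp
  qed
  have MM: "frob_inner M M = 4 * frob_inner S M + 2 * frob_inner N M"
  proof -
    have pw: "M $$ (i,j) * M $$ (i,j) = 2 * (S $$ (i,j) * M $$ (i,j)) + 2 * (S $$ (j,i) * M $$ (i,j)) + 2 * (N $$ (i,j) * M $$ (i,j))"
      if ij: "i < r" "j < r" for i j
      unfolding Ment2[OF ij] by (cases "i < r1"; cases "j < r1") (simp_all add: mu_def lam_def algebra_simps)
    have "frob_inner M M = (\<Sum>i<r. \<Sum>j<r. M $$ (i,j) * M $$ (i,j))" unfolding frob_inner_def using Mc by simp
    also have "\<dots> = (\<Sum>i<r. \<Sum>j<r. 2 * (S $$ (i,j) * M $$ (i,j)) + 2 * (S $$ (j,i) * M $$ (i,j)) + 2 * (N $$ (i,j) * M $$ (i,j)))"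
      by (intro sum.cong refl) (simp add: pw)
    also have "\<dots> = 2 * (\<Sum>i<r. \<Sum>j<r. S $$ (i,j) * M $$ (i,j)) + 2 * (\<Sum>i<r. \<Sum>j<r. S $$ (j,i) * M $$ (i,j))
        + 2 * (\<Sum>i<r. \<Sum>j<r. N $$ (i,j) * M $$ (i,j))"
      by (simp add: sum.distrib sum_distrib_left)
    also have "(\<Sum>i<r. \<Sum>j<r. S $$ (j,i) * M $$ (i,j)) = (\<Sum>j<r. \<Sum>i<r. S $$ (j,i) * M $$ (i,j))" by (rule sum.swap)
    also have "\<dots> = (\<Sum>j<r. \<Sum>i<r. S $$ (j,i) * M $$ (j,i))" by (intro sum.cong refl) (simp add: Msym)
    also have "(\<Sum>i<r. \<Sum>j<r. S $$ (i,j) * M $$ (i,j)) = frob_inner S M" unfolding frob_inner_def using Sc by simp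
    also have "(\<Sum>i<r. \<Sum>j<r. N $$ (i,j) * M $$ (i,j)) = frob_inner N M" unfolding frob_inner_def using Nc by simp
    finally show ?thesis by simp
  qed
  have NMb: "\<bar>frob_inner N M\<bar> \<le> frob_inner De De * frob_norm M"
  proof -
    have "\<bar>frob_inner N M\<bar> \<le> frob_norm N * frob_norm M" by (rule frob_cs[OF Nc Mc])
    also have "frob_norm N \<le> frob_inner De De"
    proof -
      have "(frob_norm N)^2 \<le> (frob_inner De De)^2" unfolding frob_norm_sq N_def by (rule submult[OF Dec])
      thus ?thesis using frob_inner_self_nonneg[of De] frob_norm_nonneg[of N] by (simp add: power2_le_iff_abs_le)
    qed
    hence "frob_norm N * frob_norm M \<le> frob_inner De De * frob_norm M" by (rule mult_right_mono) (simp add: frob_norm_nonneg)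
    finally show ?thesis .
  qed
  define m where "m = frob_norm M"
  define p where "p = frob_inner De De"
  have m2: "m^2 = frob_inner M M" unfolding m_def by (rule frob_norm_sq)
  have part1: "frob_inner (U - Us * Q) (U * M) \<ge> (1/8) * (frob_norm M)^2 - (1/2) * Pd^4"
  proof -
    have T: "frob_inner (U - Us * Q) (U * M) = (1/4) * m^2 + (1/2) * frob_inner N M" using Tform MM m2 by linarith
    have "frob_inner N M \<ge> - (p * m)" using NMb unfolding p_def m_def by linarith
    hence "frob_inner (U - Us * Q) (U * M) \<ge> (1/4) * m^2 - (1/2) * (p * m)" unfolding T by simp
    moreover have "(1/4) * m^2 - (1/2) * (p * m) - ((1/8) * m^2 - (1/2) * p^2) = (1/8) * (m - 2 * p)^2"
      by (simp add: power2_eq_square algebra_simps)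
    moreover have "Pd^4 = p^2" unfolding p_def Pd2[symmetric] by simp
    moreover have "(1/8) * (m - 2 * p)^2 \<ge> 0" by simp
    ultimately show ?thesis unfolding m_def[symmetric] by linarith
  qed
  define J1 where "J1 = dg r (j1 r1)"
  define J2 where "J2 = dg r (j2 r1)"
  define X1 where "X1 = U * J1"
  define X2 where "X2 = U * J2"
  define Y1 where "Y1 = Y * J1"
  define Y2 where "Y2 = Y * J2"
  have X1c: "X1 \<in> carrier_mat d r" and X2c: "X2 \<in> carrier_mat d r" and Y1c: "Y1 \<in> carrier_mat d r"
    and Y2c: "Y2 \<in> carrier_mat d r" using U Yc by (auto simp: X1_def X2_def Y1_def Y2_def J1_def J2_def)
  define A1 where "A1 = X1 * transpose_mat X1"
  define A2 where "A2 = X2 * transpose_mat X2"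
  define B1 where "B1 = Y1 * transpose_mat Y1"
  define B2 where "B2 = Y2 * transpose_mat Y2"
  have A1c: "A1 \<in> carrier_mat d d" and A2c: "A2 \<in> carrier_mat d d" and B1c: "B1 \<in> carrier_mat d d"
    and B2c: "B2 \<in> carrier_mat d d" using X1c X2c Y1c Y2c by (auto simp: A1_def A2_def B1_def B2_def)
  define E1 where "E1 = A1 - B1"
  define E2 where "E2 = A2 - B2"
  have E1c: "E1 \<in> carrier_mat d d" and E2c: "E2 \<in> carrier_mat d d" using B1c B2c by (auto simp: E1_def E2_def)
  have QL: "Q * L = L * Q" unfolding Ldg
    by (rule blockz_comm_dg[OF Qp(1) Qp(3), symmetric]) (simp add: lam_def)
  have YLY: "Us * L * transpose_mat Us = Y * L * transpose_mat Y"
  proof -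
    define W where "W = transpose_mat Q * transpose_mat Us"
    have Wc: "W \<in> carrier_mat r d" using Us Qp by (simp add: W_def)
    have "Y * L * transpose_mat Y = Us * (Q * (L * W))"
      unfolding Y_def W_def using Us Qp Lc
      by (simp add: transpose_mult assoc_mult_mat[of _ d r _ r _ r] assoc_mult_mat[of _ d r _ r _ d] assoc_mult_mat[of _ r r _ r _ d])
    also have "Q * (L * W) = (Q * L) * W" using Qp Lc Wc by (simp add: assoc_mult_mat[of _ r r _ r _ d])
    also have "\<dots> = L * (Q * W)" unfolding QL using Qp Lc Wc by (simp add: assoc_mult_mat[of _ r r _ r _ d])
    also have "Q * W = (Q * transpose_mat Q) * transpose_mat Us" unfolding W_def using Qp Us by (simp add: assoc_mult_mat[of _ r r _ r _ d])
    also have "\<dots> = transpose_mat Us" using QQt Us by simp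
    finally show ?thesis using Us Lc by (simp add: assoc_mult_mat[of _ d r _ r _ d])
  qed
  have Esplit: "E = E1 - E2"
  proof -
    have "E = (A1 - A2) - (B1 - B2)"
      unfolding E_def L_def[symmetric] YLY unfolding L_def using ZLZ[OF U r1] ZLZ[OF Yc r1]
      by (simp add: A1_def A2_def B1_def B2_def X1_def X2_def Y1_def Y2_def J1_def J2_def)
    also have "\<dots> = E1 - E2" unfolding E1_def E2_def
      by (rule eq_matI) (use A1c A2c B1c B2c in auto)
    finally show ?thesis .
  qed
  have EE: "frob_inner E E = frob_inner E1 E1 + frob_inner E2 E2 - 2 * frob_inner E1 E2"
    unfolding Esplit using E1c E2c frob_inner_sym[OF E2c E1c]
    by (simp add: frob_inner_minus_left[of _ d d] frob_inner_minus_right[of _ d d])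
  have E12: "frob_inner E1 E2 = frob_inner A1 A2 - frob_inner A1 B2 - frob_inner B1 A2 + frob_inner B1 B2"
    unfolding E1_def E2_def using A1c A2c B1c B2c
    by (simp add: frob_inner_minus_left[of _ d d] frob_inner_minus_right[of _ d d])
  have g1: "frob_inner A1 B2 \<ge> 0" unfolding A1_def B2_def gram[OF X1c Y2c] by (rule frob_inner_self_nonneg)
  have g2: "frob_inner B1 A2 \<ge> 0" unfolding B1_def A2_def gram[OF Y1c X2c] by (rule frob_inner_self_nonneg)
  have g3: "frob_inner B1 B2 = 0" unfolding B1_def B2_def gram[OF Y1c Y2c]
  proof (rule frob_zero)
    fix a b assume "a < dim_row (transpose_mat Y1 * Y2)" "b < dim_col (transpose_mat Y1 * Y2)"
    hence ab: "a < r" "b < r" using Y1c Y2c by auto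
    have "(transpose_mat Y1 * Y2) $$ (a,b) = j1 r1 a * j2 r1 b * H $$ (a,b)"
      using ab Yc by (simp add: Y1_def Y2_def J1_def J2_def H_def sum_distrib_left algebra_simps)
    also have "\<dots> = 0" using Hz[OF ab] by (cases "a < r1"; cases "b < r1") (auto simp: j1_def j2_def)
    finally show "(transpose_mat Y1 * Y2) $$ (a,b) = 0" .
  qed
  have g4: "frob_inner M M = 8 * frob_inner A1 A2"
  proof -
    define K where "K = transpose_mat X1 * X2"
    have Kc: "K \<in> carrier_mat r r" using X1c X2c by (simp add: K_def)
    have Kent: "K $$ (a,b) = j1 r1 a * j2 r1 b * G $$ (a,b)" if "a < r" "b < r" for a b
      using that U by (simp add: K_def X1_def X2_def J1_def J2_def G_def sum_distrib_left algebra_simps)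
    have pw: "M $$ (a,b) * M $$ (a,b) = 4 * (K $$ (a,b) * K $$ (a,b)) + 4 * (K $$ (b,a) * K $$ (b,a))"
      if ab: "a < r" "b < r" for a b
      unfolding Ment[OF ab] Kent[OF ab] Kent[OF ab(2) ab(1)] Gsym[OF ab]
      by (cases "a < r1"; cases "b < r1") (simp_all add: mu_def lam_def j1_def j2_def)
    have "frob_inner M M = (\<Sum>a<r. \<Sum>b<r. M $$ (a,b) * M $$ (a,b))" unfolding frob_inner_def using Mc by simp
    also have "\<dots> = (\<Sum>a<r. \<Sum>b<r. 4 * (K $$ (a,b) * K $$ (a,b)) + 4 * (K $$ (b,a) * K $$ (b,a)))"
      by (intro sum.cong refl) (simp add: pw)
    also have "\<dots> = 4 * (\<Sum>a<r. \<Sum>b<r. K $$ (a,b) * K $$ (a,b)) + 4 * (\<Sum>a<r. \<Sum>b<r. K $$ (b,a) * K $$ (b,a))"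
      by (simp add: sum.distrib sum_distrib_left)
    also have "(\<Sum>a<r. \<Sum>b<r. K $$ (b,a) * K $$ (b,a)) = (\<Sum>b<r. \<Sum>a<r. K $$ (b,a) * K $$ (b,a))" by (rule sum.swap)
    also have "(\<Sum>a<r. \<Sum>b<r. K $$ (a,b) * K $$ (a,b)) = frob_inner K K" unfolding frob_inner_def using Kc by simp
    also have "frob_inner K K = frob_inner A1 A2" unfolding K_def A1_def A2_def by (rule gram[OF X1c X2c, symmetric])
    finally show ?thesis by simp
  qed
  have tu1: "frob_inner E1 E1 \<ge> 2 * (sqrt 2 - 1) * \<sigma>^2 * frob_inner (De * J1) (De * J1)"
  proof -
    have h: "frob_inner ((U * dg r (j1 r1)) * transpose_mat (U * dg r (j1 r1)) - (Us * Q * dg r (j1 r1)) * transpose_mat (Us * Q * dg r (j1 r1)))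
                    ((U * dg r (j1 r1)) * transpose_mat (U * dg r (j1 r1)) - (Us * Q * dg r (j1 r1)) * transpose_mat (Us * Q * dg r (j1 r1)))
    \<ge> 2 * (sqrt 2 - 1) * (smallest_singular_value Us)^2 * frob_inner ((U - Us * Q) * dg r (j1 r1)) ((U - Us * Q) * dg r (j1 r1))"
    proof (rule block_tu[OF Us orth U Qp(1) Qp(2)])
      show "optP (transpose_mat (Us * Q) * U) r r1" using optPP by (simp add: P_def Y_def)
      show "j1 r1 i * j1 r1 i = j1 r1 i" for i by (simp add: j1_def)
      show "(i < r1) = (j < r1)" if "j1 r1 i \<noteq> 0" "j1 r1 j \<noteq> 0" for i j
        using that by (simp add: j1_def split: if_splits)
    qed
    show ?thesis unfolding E1_def A1_def B1_def X1_def Y1_def J1_def Y_def De_def \<sigma>_def using h .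
  qed
  have tu2: "frob_inner E2 E2 \<ge> 2 * (sqrt 2 - 1) * \<sigma>^2 * frob_inner (De * J2) (De * J2)"
  proof -
    have h: "frob_inner ((U * dg r (j2 r1)) * transpose_mat (U * dg r (j2 r1)) - (Us * Q * dg r (j2 r1)) * transpose_mat (Us * Q * dg r (j2 r1)))
                    ((U * dg r (j2 r1)) * transpose_mat (U * dg r (j2 r1)) - (Us * Q * dg r (j2 r1)) * transpose_mat (Us * Q * dg r (j2 r1)))
    \<ge> 2 * (sqrt 2 - 1) * (smallest_singular_value Us)^2 * frob_inner ((U - Us * Q) * dg r (j2 r1)) ((U - Us * Q) * dg r (j2 r1))"
    proof (rule block_tu[OF Us orth U Qp(1) Qp(2)])
      show "optP (transpose_mat (Us * Q) * U) r r1" using optPP by (simp add: P_def Y_def)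
      show "j2 r1 i * j2 r1 i = j2 r1 i" for i by (simp add: j2_def)
      show "(i < r1) = (j < r1)" if "j2 r1 i \<noteq> 0" "j2 r1 j \<noteq> 0" for i j
        using that by (simp add: j2_def split: if_splits)
    qed
    show ?thesis unfolding E2_def A2_def B2_def X2_def Y2_def J2_def Y_def De_def \<sigma>_def using h .
  qed
  have spl: "frob_inner (De * J1) (De * J1) + frob_inner (De * J2) (De * J2) = p"
    unfolding J1_def J2_def p_def by (rule split_J[OF Dec])
  define c where "c = (sqrt 2 - 1) * \<sigma>^2"
  have Enorm: "(frob_norm E)^2 = frob_inner E E" by (rule frob_norm_sq)
  have part2: "(frob_norm M)^2 \<ge> 8 * (sqrt 2 - 1) * \<sigma>^2 * Pd^2 - 4 * (frob_norm E)^2"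
  proof -
    have "2 * (c * frob_inner (De * J1) (De * J1)) = 2 * (sqrt 2 - 1) * \<sigma>^2 * frob_inner (De * J1) (De * J1)"
      unfolding c_def by (simp only: mult_ac)
    hence t1: "frob_inner E1 E1 \<ge> 2 * (c * frob_inner (De * J1) (De * J1))" using tu1 by linarith
    have "2 * (c * frob_inner (De * J2) (De * J2)) = 2 * (sqrt 2 - 1) * \<sigma>^2 * frob_inner (De * J2) (De * J2)"
      unfolding c_def by (simp only: mult_ac)
    hence t2: "frob_inner E2 E2 \<ge> 2 * (c * frob_inner (De * J2) (De * J2))" using tu2 by linarith
    have cs: "c * frob_inner (De * J1) (De * J1) + c * frob_inner (De * J2) (De * J2) = c * p"
      using spl by (simp add: distrib_left[symmetric])
    have "8 * (sqrt 2 - 1) * \<sigma>^2 * Pd^2 = 8 * (c * p)" unfolding Pd2 p_def c_def by (simp add: mult_ac)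
    thus ?thesis unfolding Enorm m2[unfolded m_def] using EE E12 g1 g2 g3 g4 t1 t2 cs by linarith
  qed
  have part3: "frob_inner (U - Us * Q) (U * M) \<ge> (sqrt 2 - 1) * \<sigma>^2 * Pd^2 - (1/2) * (frob_norm E)^2 - (1/2) * Pd^4"
    using part1 part2 by linarith
  show ?thesis using part1 part2 part3 by blast
qed


end
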